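(* Let $d\geq 2$ be a fixed odd integer, $c_0\geq 1$ a constant, $C_1=2^{10d}c_0$, $m=m(n)$, $p_1=(\log (mn))^{1/d}/(m^{(d-1)/(2d)}n^{(d-1)/(2d)})$ with $p_1 n\geq p_1 m\geq (\log n)^4$. Then with probability at least $1-n^{-\Omega(1)}$, in $G(m,n,C_1p_1)$ with parts $U,V$, every two distinct vertices of $V$ are connected by at least $2^{10d}c_0\log n$ internally vertex-disjoint paths of length exactly $d+1$.
   Context: $G(m,n,p)$ is the random bipartite graph with parts $U,V$, $|U|=m$, $|V|=n$, each edge between $U$ and $V$ present independently with probability $p$. $\log$ is the logarithm to base $2$; asymptotic notation is as $n\to\infty$. *)

theory Defs
  imports "HOL-Probability.Probability"
begin

text \<open>Random bipartite graph G(m,n,p): parts U = {0..<m} (vertices Inl u) and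
 V = {0..<n} (vertices Inr v).\<close>

definition random_bip :: "nat \<Rightarrow> nat \<Rightarrow> real \<Rightarrow> (nat \<times> nat \<Rightarrow> bool) pmf" where
  "random_bip m n p = Pi_pmf ({0..<m} \<times> {0..<n}) False (\<lambda>_. bernoulli_pmf p)"

fun bip_adj :: "nat \<Rightarrow> nat \<Rightarrow> (nat \<times> nat \<Rightarrow> bool) \<Rightarrow> nat + nat \<Rightarrow> nat + nat \<Rightarrow> bool" where
  "bip_adj m n G (Inl u) (Inr v) = (u < m \<and> v < n \<and> G (u, v))"
| "bip_adj m n G (Inr v) (Inl u) = (u < m \<and> v < n \<and> G (u, v))"
| "bip_adj m n G _ _ = False"

definition is_path :: "nat \<Rightarrow> nat \<Rightarrow> (nat \<times> nat \<Rightarrow> bool) \<Rightarrow> nat \<Rightarrow> nat + nat \<Rightarrow> nat + nat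
    \<Rightarrow> (nat + nat) list \<Rightarrow> bool" where
  "is_path m n G L x y p \<longleftrightarrow> length p = L + 1 \<and> distinct p \<and> hd p = x \<and> last p = y \<and>
     (\<forall>i < L. bip_adj m n G (p ! i) (p ! Suc i))"

definition internal :: "'a list \<Rightarrow> 'a set" where
  "internal p = set (butlast (tl p))"

definition many_disjoint_paths :: "nat \<Rightarrow> nat \<Rightarrow> (nat \<times> nat \<Rightarrow> bool) \<Rightarrow> nat \<Rightarrow> real
    \<Rightarrow> nat + nat \<Rightarrow> nat + nat \<Rightarrow> bool" where
  "many_disjoint_paths m n G L k x y \<longleftrightarrow>
     (\<exists>P. finite P \<and> real (card P) \<ge> k \<and> (\<forall>p\<in>P. is_path m n G L x y p) \<and>
        (\<forall>p\<in>P. \<forall>q\<in>P. p \<noteq> q \<longrightarrow> internal p \<inter> internal q = {}))"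

end

theory Submission
  imports Defs
begin


lemma Pi_pmf_split_bind:
  assumes "finite S" "A \<subseteq> S"
  shows "Pi_pmf S dflt P = bind_pmf (Pi_pmf (S - A) dflt P)
           (\<lambda>g. map_pmf (\<lambda>h x. if x \<in> A then h x else g x) (Pi_pmf A dflt P))"
proof -
  have fA: "finite A" using assms finite_subset by blast
  have "S = A \<union> (S - A)" using assms by blast
  hence "Pi_pmf S dflt P = map_pmf (\<lambda>(f,g) x. if x \<in> A then f x else g x)
             (pair_pmf (Pi_pmf A dflt P) (Pi_pmf (S - A) dflt P))"
    using Pi_pmf_union[of A "S - A" dflt P] fA assms by auto
  also have "\<dots> = bind_pmf (Pi_pmf (S - A) dflt P)
           (\<lambda>g. map_pmf (\<lambda>h x. if x \<in> A then h x else g x) (Pi_pmf A dflt P))"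
    apply (subst pair_commute_pmf)
    apply (simp add: pair_pmf_def map_pmf_def bind_assoc_pmf bind_return_pmf)
    done
  finally show ?thesis .
qed

lemma prob_Pi_cond:
  assumes "finite S" "A \<subseteq> S"
    and le: "\<And>g. measure_pmf.prob (Pi_pmf A dflt P) {h. (\<lambda>x. if x \<in> A then h x else g x) \<in> E} \<le> \<delta>"
  shows "measure_pmf.prob (Pi_pmf S dflt P) E \<le> \<delta>"
proof -
  have d0: "\<delta> \<ge> 0" using le[of undefined] measure_nonneg order_trans by blast
  have "emeasure (measure_pmf (Pi_pmf S dflt P)) E =
     (\<integral>\<^sup>+g. emeasure (map_pmf (\<lambda>h x. if x \<in> A then h x else g x) (Pi_pmf A dflt P)) E \<partial>Pi_pmf (S - A) dflt P)"
    by (subst Pi_pmf_split_bind[OF assms(1,2)]) simp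
  also have "\<dots> \<le> (\<integral>\<^sup>+g. ennreal \<delta> \<partial>Pi_pmf (S - A) dflt P)"
  proof (intro nn_integral_mono)
    fix g
    have "emeasure (map_pmf (\<lambda>h x. if x \<in> A then h x else g x) (Pi_pmf A dflt P)) E
       = ennreal (measure_pmf.prob (Pi_pmf A dflt P) {h. (\<lambda>x. if x \<in> A then h x else g x) \<in> E})"
      by (simp add: measure_pmf.emeasure_eq_measure vimage_def)
    also have "\<dots> \<le> ennreal \<delta>" using le by (intro ennreal_leI) auto
    finally show "emeasure (map_pmf (\<lambda>h x. if x \<in> A then h x else g x) (Pi_pmf A dflt P)) E \<le> ennreal \<delta>" .
  qed
  also have "\<dots> = ennreal \<delta>" by (simp add: measure_pmf.emeasure_space_1)
  finally show ?thesis using d0 by (simp add: measure_pmf.emeasure_eq_measure)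
qed


lemma bool_pmf_eqI:
  fixes M N :: "bool pmf"
  assumes "pmf M False = pmf N False"
  shows "M = N"
proof -
  have "(\<Sum>x\<in>UNIV. pmf M x) = 1" "(\<Sum>x\<in>UNIV. pmf N x) = 1"
    by (rule sum_pmf_eq_1; simp)+
  hence "pmf M True = pmf N True" using assms by (simp add: UNIV_bool)
  thus ?thesis using assms by (intro pmf_eqI) (case_tac i; simp)
qed

lemma bern_or:
  assumes "0 \<le> p" "p \<le> 1" "0 \<le> q" "q \<le> 1"
  shows "map_pmf (\<lambda>(a,b). a \<or> b) (pair_pmf (bernoulli_pmf p) (bernoulli_pmf q))
         = bernoulli_pmf (1 - (1 - p) * (1 - q))"
proof (rule bool_pmf_eqI)
  have "(\<lambda>(a,b). a \<or> b) -` {False} = {(False, False)}" by auto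
  hence "pmf (map_pmf (\<lambda>(a,b). a \<or> b) (pair_pmf (bernoulli_pmf p) (bernoulli_pmf q))) False
      = (1 - p) * (1 - q)"
    using assms by (simp add: pmf_map measure_pmf_single pmf_pair)
  moreover have "0 \<le> (1 - p) * (1 - q)" "(1 - p) * (1 - q) \<le> 1"
    using assms by (auto intro: mult_le_one)
  ultimately show "pmf (map_pmf (\<lambda>(a,b). a \<or> b) (pair_pmf (bernoulli_pmf p) (bernoulli_pmf q))) False
      = pmf (bernoulli_pmf (1 - (1 - p) * (1 - q))) False" by simp
qed

lemma map_Pi_exists:
  assumes "finite R" "inj_on f R" "0 \<le> p" "p \<le> 1"
  shows "map_pmf (\<lambda>h. \<exists>u\<in>R. h (f u)) (Pi_pmf (f ` R) False (\<lambda>_. bernoulli_pmf p))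
         = bernoulli_pmf (1 - (1 - p) ^ card R)"
  using assms(1,2)
proof (induction R rule: finite_induct)
  case empty
  have "bernoulli_pmf 0 = return_pmf False" by (rule bool_pmf_eqI) simp
  then show ?case by simp
next
  case (insert u R)
  have inj: "inj_on f R" using insert.prems by (auto simp: inj_on_def)
  have nin: "f u \<notin> f ` R" using insert by (auto simp: inj_on_def)
  have nin': "\<forall>u'\<in>R. f u' \<noteq> f u" using nin by (metis image_eqI)
  have q01: "0 \<le> (1-p)^card R" "(1-p)^card R \<le> 1" using assms by (auto intro: power_le_one)
  have "map_pmf (\<lambda>h. \<exists>u'\<in>insert u R. h (f u')) (Pi_pmf (f ` insert u R) False (\<lambda>_. bernoulli_pmf p))
      = map_pmf (\<lambda>h. \<exists>u'\<in>insert u R. h (f u'))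
          (map_pmf (\<lambda>(y,g). g(f u:=y)) (pair_pmf (bernoulli_pmf p) (Pi_pmf (f ` R) False (\<lambda>_. bernoulli_pmf p))))"
    using nin insert.hyps by (simp add: Pi_pmf_insert)
  also have "\<dots> = map_pmf (\<lambda>(a,b). a \<or> b) (map_pmf (\<lambda>(y,g). (y, \<exists>u'\<in>R. g (f u')))
          (pair_pmf (bernoulli_pmf p) (Pi_pmf (f ` R) False (\<lambda>_. bernoulli_pmf p))))"
    unfolding map_pmf_comp
    apply (intro map_pmf_cong refl)
    using nin' by (auto simp: case_prod_unfold)
  also have "map_pmf (\<lambda>(y,g). (y, \<exists>u'\<in>R. g (f u')))
          (pair_pmf (bernoulli_pmf p) (Pi_pmf (f ` R) False (\<lambda>_. bernoulli_pmf p)))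
       = pair_pmf (bernoulli_pmf p) (map_pmf (\<lambda>h. \<exists>u\<in>R. h (f u)) (Pi_pmf (f ` R) False (\<lambda>_. bernoulli_pmf p)))"
    by (simp add: pair_map_pmf2 apsnd_def map_prod_def case_prod_unfold)
  also have "\<dots> = pair_pmf (bernoulli_pmf p) (bernoulli_pmf (1 - (1 - p) ^ card R))"
    using insert.IH inj by simp
  also have "map_pmf (\<lambda>(a,b). a \<or> b) \<dots> = bernoulli_pmf (1 - (1 - p) * (1 - (1 - (1 - p) ^ card R)))"
    using assms q01 by (intro bern_or) auto
  also have "1 - (1 - p) * (1 - (1 - (1 - p) ^ card R)) = 1 - (1-p) ^ card (insert u R)"
    using insert.hyps by simp
  finally show ?case .
qed


lemma map_Pi_block:
  assumes "finite R" "finite L" "inj_on (case_prod \<pi>) (R \<times> L)" "0 \<le> p" "p \<le> 1"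
  shows "map_pmf (\<lambda>h w. w \<in> L \<and> (\<exists>u\<in>R. h (\<pi> u w))) (Pi_pmf (case_prod \<pi> ` (R \<times> L)) False (\<lambda>_. bernoulli_pmf p))
         = Pi_pmf L False (\<lambda>_. bernoulli_pmf (1 - (1 - p) ^ card R))"
  using assms(2,3)
proof (induction L rule: finite_induct)
  case empty
  then show ?case by simp
next
  case (insert w L)
  define A where "A = (\<lambda>u. \<pi> u w) ` R"
  define B where "B = case_prod \<pi> ` (R \<times> L)"
  have inj: "inj_on (case_prod \<pi>) (R \<times> L)" using insert.prems by (rule inj_on_subset) auto
  have injw: "inj_on (\<lambda>u. \<pi> u w) R" using insert.prems by (auto simp: inj_on_def)
  have eq: "case_prod \<pi> ` (R \<times> insert w L) = A \<union> B" by (auto simp: A_def B_def)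
  have disj: "\<And>u u' w'. u \<in> R \<Longrightarrow> u' \<in> R \<Longrightarrow> w' \<in> L \<Longrightarrow> \<pi> u' w' \<noteq> \<pi> u w"
  proof
    fix u u' w' assume "u \<in> R" "u' \<in> R" "w' \<in> L" "\<pi> u' w' = \<pi> u w"
    then have "(u',w') = (u,w)" using insert.prems unfolding inj_on_def by force
    then show False using \<open>w' \<in> L\<close> insert.hyps by auto
  qed
  have AB: "A \<inter> B = {}" using disj unfolding A_def B_def by fastforce
  have fin: "finite A" "finite B" using assms(1) insert.hyps by (auto simp: A_def B_def)
  let ?q = "1 - (1 - p) ^ card R"
  have q01: "0 \<le> ?q" "?q \<le> 1" using assms by (auto intro: power_le_one)
  have "map_pmf (\<lambda>h w'. w' \<in> insert w L \<and> (\<exists>u\<in>R. h (\<pi> u w'))) (Pi_pmf (A \<union> B) False (\<lambda>_. bernoulli_pmf p))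
      = map_pmf (\<lambda>h w'. w' \<in> insert w L \<and> (\<exists>u\<in>R. h (\<pi> u w')))
          (map_pmf (\<lambda>(f,g) x. if x \<in> A then f x else g x)
             (pair_pmf (Pi_pmf A False (\<lambda>_. bernoulli_pmf p)) (Pi_pmf B False (\<lambda>_. bernoulli_pmf p))))"
    using fin AB by (simp add: Pi_pmf_union)
  also have "\<dots> = map_pmf (\<lambda>(a,g). g(w := a)) (map_pmf (\<lambda>(f,g). (\<exists>u\<in>R. f (\<pi> u w), \<lambda>w'. w' \<in> L \<and> (\<exists>u\<in>R. g (\<pi> u w'))))
             (pair_pmf (Pi_pmf A False (\<lambda>_. bernoulli_pmf p)) (Pi_pmf B False (\<lambda>_. bernoulli_pmf p))))"
    unfolding map_pmf_comp
    apply (intro map_pmf_cong refl)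
    using disj insert.hyps by (auto simp: case_prod_unfold fun_eq_iff A_def)
  also have "map_pmf (\<lambda>(f,g). (\<exists>u\<in>R. f (\<pi> u w), \<lambda>w'. w' \<in> L \<and> (\<exists>u\<in>R. g (\<pi> u w'))))
             (pair_pmf (Pi_pmf A False (\<lambda>_. bernoulli_pmf p)) (Pi_pmf B False (\<lambda>_. bernoulli_pmf p)))
     = pair_pmf (map_pmf (\<lambda>f. \<exists>u\<in>R. f (\<pi> u w)) (Pi_pmf A False (\<lambda>_. bernoulli_pmf p)))
                (map_pmf (\<lambda>g w'. w' \<in> L \<and> (\<exists>u\<in>R. g (\<pi> u w'))) (Pi_pmf B False (\<lambda>_. bernoulli_pmf p)))"
    by (simp add: pair_map_pmf1 pair_map_pmf2 map_pmf_comp apsnd_def apfst_def map_prod_def case_prod_unfold)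
  also have "map_pmf (\<lambda>f. \<exists>u\<in>R. f (\<pi> u w)) (Pi_pmf A False (\<lambda>_. bernoulli_pmf p)) = bernoulli_pmf ?q"
    unfolding A_def using map_Pi_exists[OF assms(1) injw assms(4,5)] by simp
  also have "map_pmf (\<lambda>g w'. w' \<in> L \<and> (\<exists>u\<in>R. g (\<pi> u w'))) (Pi_pmf B False (\<lambda>_. bernoulli_pmf p))
     = Pi_pmf L False (\<lambda>_. bernoulli_pmf ?q)"
    unfolding B_def using insert.IH inj by simp
  also have "map_pmf (\<lambda>(a,g). g(w := a)) (pair_pmf (bernoulli_pmf ?q) (Pi_pmf L False (\<lambda>_. bernoulli_pmf ?q)))
     = Pi_pmf (insert w L) False (\<lambda>_. bernoulli_pmf ?q)"
    using insert.hyps by (simp add: Pi_pmf_insert)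
  finally show ?case using eq by simp
qed


lemma ln2_le: "ln (2::real) \<le> 3/4"
proof -
  have "(35/32::real)^8 \<le> exp (3/32) ^ 8"
    by (intro power_mono) (use exp_ge_add_one_self[of "3/32::real"] in auto)
  also have "\<dots> = exp (3/4)" by (simp flip: exp_of_nat_mult)
  finally have "2 \<le> exp (3/4::real)" by (rule order_trans[rotated]) (simp add: power_divide divide_simps)
  thus ?thesis by (metis ln_exp ln_le_cancel_iff exp_gt_zero zero_less_numeral)
qed

lemma chernoff_lower:
  assumes "finite L" "0 \<le> q" "q \<le> 1"
  shows "measure_pmf.prob (Pi_pmf L False (\<lambda>_. bernoulli_pmf q))
           {f. real (card {w\<in>L. f w}) \<le> real (card L) * q / 2} \<le> exp (- real (card L) * q / 8)"
proof -
  define M where "M = Pi_pmf L False (\<lambda>_. bernoulli_pmf q)"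
  define N where "N = real (card L)"
  define a where "a = N * q / 2"
  define Y where "Y = (\<lambda>f. \<Prod>w\<in>L. (\<lambda>b. if b then 1/2 else (1::real)) (f w))"
  have Y_eq: "Y f = (1/2) ^ card {w\<in>L. f w}" for f
  proof -
    have "Y f = (\<Prod>w\<in>L. if f w then 1/2 else (1::real))" by (simp add: Y_def)
    also have "\<dots> = (\<Prod>w\<in>{w\<in>L. f w}. 1/2)"
      using assms(1) by (subst prod.inter_filter[symmetric]) auto
    finally show ?thesis by simp
  qed
  have int: "integrable M Y"
    unfolding M_def Y_def by (intro integrable_prod_Pi_pmf assms(1) integrable_measure_pmf_finite) auto
  have EY: "measure_pmf.expectation M Y = (1 - q/2) ^ card L"
  proof -
    have "measure_pmf.expectation M Y = (\<Prod>w\<in>L. measure_pmf.expectation (bernoulli_pmf q) (\<lambda>b. if b then 1/2 else (1::real)))"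
      unfolding M_def Y_def by (intro expectation_prod_Pi_pmf assms(1) integrable_measure_pmf_finite) auto
    also have "\<dots> = (\<Prod>w\<in>L. 1 - q/2)" using assms by simp
    finally show ?thesis by simp
  qed
  have EY2: "(1 - q/2) ^ card L \<le> exp (- N * q / 2)"
  proof -
    have "(1 - q/2) ^ card L \<le> exp (- q/2) ^ card L"
      using assms by (intro power_mono) (use exp_ge_add_one_self[of "-q/2"] in auto)
    also have "\<dots> = exp (- N * q / 2)" by (simp add: N_def flip: exp_of_nat_mult)
    finally show ?thesis .
  qed
  define c where "c = exp (- a * ln 2)"
  have c0: "c > 0" by (simp add: c_def)
  have sub: "{f. real (card {w\<in>L. f w}) \<le> N * q / 2} \<subseteq> {f \<in> space M. Y f \<ge> c}"
  proof
    fix f assume "f \<in> {f. real (card {w\<in>L. f w}) \<le> N * q / 2}"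
    hence k: "real (card {w\<in>L. f w}) \<le> a" by (simp add: a_def)
    have "Y f = exp (- real (card {w\<in>L. f w}) * ln 2)"
    proof -
      have "exp (real (card {w\<in>L. f w}) * ln 2) = 2 ^ card {w\<in>L. f w}"
        by (simp add: exp_of_nat_mult)
      thus ?thesis unfolding Y_eq by (simp add: power_one_over exp_minus inverse_eq_divide)
    qed
    also have "\<dots> \<ge> c" unfolding c_def using k by simp
    finally show "f \<in> {f \<in> space M. Y f \<ge> c}" by simp
  qed
  have "measure_pmf.prob M {f. real (card {w\<in>L. f w}) \<le> N * q / 2} \<le> measure_pmf.prob M {f \<in> space M. Y f \<ge> c}"
    by (intro measure_pmf.finite_measure_mono sub) auto
  also have "\<dots> \<le> measure_pmf.expectation M Y / c"
    by (intro integral_Markov_inequality_measure[where A = UNIV] int c0) (auto simp: Y_def intro!: prod_nonneg)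
  also have "\<dots> \<le> exp (- N * q / 2) / c" using EY EY2 c0 by (simp add: divide_right_mono)
  also have "\<dots> = exp (- N * q / 2 + a * ln 2)" by (simp add: c_def exp_minus field_simps exp_add[symmetric])
  also have "\<dots> \<le> exp (- N * q / 8)"
  proof -
    have "N * q \<ge> 0" using assms by (simp add: N_def)
    hence "a * ln 2 \<le> (N * q / 2) * (3/4)" unfolding a_def using ln2_le by (intro mult_left_mono) auto
    thus ?thesis by simp
  qed
  finally show ?thesis by (simp add: M_def N_def)
qed

lemma prob_all_false:
  assumes "finite L" "0 \<le> q" "q \<le> 1"
  shows "measure_pmf.prob (Pi_pmf L False (\<lambda>_. bernoulli_pmf q)) {f. \<forall>w\<in>L. \<not> f w} = (1 - q) ^ card L"
proof -
  have "{f. \<forall>w\<in>L. \<not> f w} = Pi L (\<lambda>_. {False})" by (auto simp: Pi_def)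
  thus ?thesis using assms by (simp add: measure_Pi_pmf_Pi measure_pmf_single)
qed


primrec reach :: "(nat \<Rightarrow> 'v set) \<Rightarrow> ('v \<Rightarrow> 'v \<Rightarrow> 'a) \<Rightarrow> ('a \<Rightarrow> bool) \<Rightarrow> nat \<Rightarrow> 'v set" where
  "reach L \<pi> G 0 = L 0"
| "reach L \<pi> G (Suc j) = {w \<in> L (Suc j). \<exists>u\<in>reach L \<pi> G j. G (\<pi> u w)}"

definition blk :: "(nat \<Rightarrow> 'v set) \<Rightarrow> ('v \<Rightarrow> 'v \<Rightarrow> 'a) \<Rightarrow> nat \<Rightarrow> 'a set" where
  "blk L \<pi> j = case_prod \<pi> ` (L j \<times> L (Suc j))"

lemma reach_sub: "reach L \<pi> G j \<subseteq> L j"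
  by (cases j) auto

lemma reach_dep:
  assumes "\<And>i e. i < j \<Longrightarrow> e \<in> blk L \<pi> i \<Longrightarrow> G e = G' e"
  shows "reach L \<pi> G j = reach L \<pi> G' j"
  using assms
proof (induction j)
  case 0 then show ?case by simp
next
  case (Suc j)
  have IH: "reach L \<pi> G j = reach L \<pi> G' j" by (rule Suc.IH) (metis Suc.prems less_SucI)
  have "\<And>u w. u \<in> reach L \<pi> G j \<Longrightarrow> w \<in> L (Suc j) \<Longrightarrow> G (\<pi> u w) = G' (\<pi> u w)"
    using Suc.prems[of j] reach_sub[of L \<pi> G j] by (force simp: blk_def)
  then show ?case using IH by auto
qed

lemma prob_restrict_Pi:
  assumes "finite A" "A' \<subseteq> A"
    and "\<And>h. h \<in> E \<longleftrightarrow> (\<lambda>x. if x \<in> A' then h x else dflt) \<in> E"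
  shows "measure_pmf.prob (Pi_pmf A dflt P) E = measure_pmf.prob (Pi_pmf A' dflt P) E"
proof -
  have "measure_pmf.prob (Pi_pmf A' dflt P) E =
    measure_pmf.prob (map_pmf (\<lambda>f x. if x \<in> A' then f x else dflt) (Pi_pmf A dflt P)) E"
    using assms(1,2) by (simp add: Pi_pmf_subset[symmetric])
  also have "\<dots> = measure_pmf.prob (Pi_pmf A dflt P) E"
    using assms(3) by (simp add: vimage_def)
  finally show ?thesis ..
qed

lemma step_bound:
  assumes S: "finite S" "blk L \<pi> j \<subseteq> S"
    and disj: "\<And>i. i < j \<Longrightarrow> blk L \<pi> i \<inter> blk L \<pi> j = {}"
    and fin: "finite (L j)" "finite (L (Suc j))"
    and inj: "inj_on (case_prod \<pi>) (L j \<times> L (Suc j))"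
    and p: "0 \<le> p" "p \<le> 1" and d0: "\<delta> \<ge> 0"
    and bnd: "\<And>R. R \<subseteq> L j \<Longrightarrow> real (card R) \<ge> s \<Longrightarrow>
        measure_pmf.prob (Pi_pmf (L (Suc j)) False (\<lambda>_. bernoulli_pmf (1 - (1 - p) ^ card R)))
          {f. real (card {w\<in>L (Suc j). f w}) < s'} \<le> \<delta>"
  shows "measure_pmf.prob (Pi_pmf S False (\<lambda>_. bernoulli_pmf p))
     {G. real (card (reach L \<pi> G j)) \<ge> s \<and> real (card (reach L \<pi> G (Suc j))) < s'} \<le> \<delta>"
proof (rule prob_Pi_cond[OF S])
  fix g :: "'a \<Rightarrow> bool"
  define A where "A = blk L \<pi> j"
  define mg where "mg = (\<lambda>h x. if x \<in> A then h x else g x)"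
  define R where "R = reach L \<pi> g j"
  have RL: "R \<subseteq> L j" unfolding R_def by (rule reach_sub)
  have finR: "finite R" using RL fin finite_subset by blast
  have reachj: "reach L \<pi> (mg h) j = R" for h
    unfolding R_def by (rule reach_dep) (use disj in \<open>auto simp: mg_def A_def\<close>)
  have reachS: "reach L \<pi> (mg h) (Suc j) = {w \<in> L (Suc j). \<exists>u\<in>R. h (\<pi> u w)}" for h
  proof -
    have "\<And>u w. u \<in> R \<Longrightarrow> w \<in> L (Suc j) \<Longrightarrow> \<pi> u w \<in> A"
      using RL by (force simp: A_def blk_def)
    hence "\<And>u w. u \<in> R \<Longrightarrow> w \<in> L (Suc j) \<Longrightarrow> mg h (\<pi> u w) = h (\<pi> u w)"
      by (simp add: mg_def)
    moreover have "reach L \<pi> (mg h) (Suc j) = {w \<in> L (Suc j). \<exists>u\<in>R. mg h (\<pi> u w)}"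
      using reachj[of h] by simp
    ultimately show ?thesis by auto
  qed
  show "measure_pmf.prob (Pi_pmf (blk L \<pi> j) False (\<lambda>_. bernoulli_pmf p))
     {h. (\<lambda>x. if x \<in> blk L \<pi> j then h x else g x) \<in>
       {G. real (card (reach L \<pi> G j)) \<ge> s \<and> real (card (reach L \<pi> G (Suc j))) < s'}} \<le> \<delta>"
  proof -
  let ?EE = "{G. real (card (reach L \<pi> G j)) \<ge> s \<and> real (card (reach L \<pi> G (Suc j))) < s'}"
  have eqset: "{h. (\<lambda>x. if x \<in> blk L \<pi> j then h x else g x) \<in> ?EE} = {h. mg h \<in> ?EE}"
    by (simp add: mg_def A_def)
  have "measure_pmf.prob (Pi_pmf A False (\<lambda>_. bernoulli_pmf p)) {h. mg h \<in> ?EE} \<le> \<delta>"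
  proof (cases "real (card R) \<ge> s")
    case False
    hence e: "{h. mg h \<in> ?EE} = {}" using reachj by auto
    show ?thesis unfolding e using d0 by simp
  next
    case True
    define A' where "A' = case_prod \<pi> ` (R \<times> L (Suc j))"
    define E where "E = {h. real (card {w \<in> L (Suc j). \<exists>u\<in>R. h (\<pi> u w)}) < s'}"
    have A'A: "A' \<subseteq> A" using RL by (auto simp: A'_def A_def blk_def)
    have finA: "finite A" using fin by (simp add: A_def blk_def)
    have injR: "inj_on (case_prod \<pi>) (R \<times> L (Suc j))"
      by (rule inj_on_subset[OF inj]) (use RL in auto)
    have "{h. mg h \<in> ?EE} = E"
      using True by (auto simp del: reach.simps simp add: reachj reachS E_def)
    moreover have "measure_pmf.prob (Pi_pmf A False (\<lambda>_. bernoulli_pmf p)) E =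
                   measure_pmf.prob (Pi_pmf A' False (\<lambda>_. bernoulli_pmf p)) E"
    proof (rule prob_restrict_Pi[OF finA A'A])
      fix h
      have "\<And>u w. u \<in> R \<Longrightarrow> w \<in> L (Suc j) \<Longrightarrow> \<pi> u w \<in> A'" by (force simp: A'_def)
      hence "{w \<in> L (Suc j). \<exists>u\<in>R. h (\<pi> u w)} = {w \<in> L (Suc j). \<exists>u\<in>R. (if \<pi> u w \<in> A' then h (\<pi> u w) else False)}"
        by auto
      thus "h \<in> E \<longleftrightarrow> (\<lambda>x. if x \<in> A' then h x else False) \<in> E" by (simp add: E_def)
    qed
    moreover have "measure_pmf.prob (Pi_pmf A' False (\<lambda>_. bernoulli_pmf p)) E =
        measure_pmf.prob (map_pmf (\<lambda>h w. w \<in> L (Suc j) \<and> (\<exists>u\<in>R. h (\<pi> u w))) (Pi_pmf A' False (\<lambda>_. bernoulli_pmf p)))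
          {f. real (card {w\<in>L (Suc j). f w}) < s'}"
      by (simp add: E_def vimage_def)
    moreover have "map_pmf (\<lambda>h w. w \<in> L (Suc j) \<and> (\<exists>u\<in>R. h (\<pi> u w))) (Pi_pmf A' False (\<lambda>_. bernoulli_pmf p))
        = Pi_pmf (L (Suc j)) False (\<lambda>_. bernoulli_pmf (1 - (1 - p) ^ card R))"
      unfolding A'_def by (rule map_Pi_block[OF finR fin(2) injR p])
    ultimately show ?thesis using bnd[OF RL True]
      by simp
  qed
  then show ?thesis unfolding eqset by (simp only: A_def)
  qed
qed

lemma explore_bound:
  assumes S: "finite S"
    and st: "\<And>j. j < D \<Longrightarrow> measure_pmf.prob (Pi_pmf S False (\<lambda>_. bernoulli_pmf p))
     {G. real (card (reach L \<pi> G j)) \<ge> s j \<and> real (card (reach L \<pi> G (Suc j))) < s (Suc j)} \<le> \<delta> j"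
    and s0: "s 0 \<le> real (card (L 0))" and sD: "s D > 0"
  shows "measure_pmf.prob (Pi_pmf S False (\<lambda>_. bernoulli_pmf p)) {G. reach L \<pi> G D = {}} \<le> (\<Sum>j<D. \<delta> j)"
proof -
  let ?M = "Pi_pmf S False (\<lambda>_. bernoulli_pmf p)"
  let ?E = "\<lambda>j. {G. real (card (reach L \<pi> G j)) \<ge> s j \<and> real (card (reach L \<pi> G (Suc j))) < s (Suc j)}"
  have sub: "{G. reach L \<pi> G D = {}} \<subseteq> (\<Union>j\<in>{..<D}. ?E j)"
  proof
    fix G assume G: "G \<in> {G. reach L \<pi> G D = {}}"
    show "G \<in> (\<Union>j\<in>{..<D}. ?E j)"
    proof (rule ccontr)
      assume "G \<notin> (\<Union>j\<in>{..<D}. ?E j)"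
      hence nE: "\<And>j. j < D \<Longrightarrow> G \<notin> ?E j" by auto
      have "j \<le> D \<Longrightarrow> real (card (reach L \<pi> G j)) \<ge> s j" for j
      proof (induction j)
        case 0 then show ?case using s0 by simp
      next
        case (Suc j)
        then show ?case using nE[of j] by auto
      qed
      from this[of D] sD G show False by simp
    qed
  qed
  have "measure_pmf.prob ?M {G. reach L \<pi> G D = {}} \<le> measure_pmf.prob ?M (\<Union>j\<in>{..<D}. ?E j)"
    by (intro measure_pmf.finite_measure_mono sub) auto
  also have "\<dots> \<le> (\<Sum>j<D. measure_pmf.prob ?M (?E j))"
    by (intro measure_pmf.finite_measure_subadditive_finite) auto
  also have "\<dots> \<le> (\<Sum>j<D. \<delta> j)" by (intro sum_mono st) auto
  finally show ?thesis .
qed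


lemma reach_path:
  assumes "w \<in> reach L \<pi> G j"
  shows "\<exists>ps. length ps = Suc j \<and> (\<forall>i\<le>j. ps ! i \<in> L i) \<and> last ps = w \<and>
              (\<forall>i<j. G (\<pi> (ps ! i) (ps ! Suc i)))"
  using assms
proof (induction j arbitrary: w)
  case 0
  then show ?case by (intro exI[of _ "[w]"]) auto
next
  case (Suc j)
  then obtain u where u: "u \<in> reach L \<pi> G j" "G (\<pi> u w)" "w \<in> L (Suc j)" by auto
  then obtain ps where ps: "length ps = Suc j" "\<forall>i\<le>j. ps ! i \<in> L i" "last ps = u"
      "\<forall>i<j. G (\<pi> (ps ! i) (ps ! Suc i))" using Suc.IH by blast
  have psj: "ps ! j = u" using ps(1,3) by (metis diff_Suc_1 last_conv_nth list.size(3) nat.distinct(1))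
  show ?case
  proof (intro exI[of _ "ps @ [w]"] conjI allI impI)
    show "length (ps @ [w]) = Suc (Suc j)" using ps by simp
    show "last (ps @ [w]) = w" by simp
  next
    fix i assume "i \<le> Suc j"
    then show "(ps @ [w]) ! i \<in> L i" using ps u by (cases "i = Suc j") (auto simp: nth_append)
  next
    fix i assume i: "i < Suc j"
    show "G (\<pi> ((ps @ [w]) ! i) ((ps @ [w]) ! Suc i))"
    proof (cases "i = j")
      case True then show ?thesis using ps(1) psj u by (simp add: nth_append)
    next
      case False then show ?thesis using ps i by (simp add: nth_append)
    qed
  qed
qed

lemma card_small_subsets:
  fixes X :: "'a set"
  assumes "finite X"
  shows "card {W. W \<subseteq> X \<and> card W \<le> K} \<le> (card X + 1) ^ K"
proof -
  define F where "F = (\<lambda>f::nat \<Rightarrow> 'a option. {x. \<exists>i<K. f i = Some x})"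
  define P where "P = PiE {..<K} (\<lambda>_. insert None (Some ` X))"
  have "{W. W \<subseteq> X \<and> card W \<le> K} \<subseteq> F ` P"
  proof
    fix W assume W: "W \<in> {W. W \<subseteq> X \<and> card W \<le> K}"
    hence fW: "finite W" using assms finite_subset by blast
    obtain xs where xs: "set xs = W" "distinct xs" using finite_distinct_list[OF fW] by blast
    have len: "length xs \<le> K" using W xs distinct_card by fastforce
    define f where "f = restrict (\<lambda>i. if i < length xs then Some (xs ! i) else None) {..<K}"
    have "\<And>i. i < length xs \<Longrightarrow> xs ! i \<in> X" using W xs nth_mem by blast
    hence "f \<in> P" by (auto simp: f_def P_def)
    moreover have "F f = W"
    proof
      show "F f \<subseteq> W" using xs by (auto simp: F_def f_def split: if_splits)
      show "W \<subseteq> F f"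
      proof
        fix x assume "x \<in> W"
        then obtain i where "i < length xs" "xs ! i = x" using xs by (metis in_set_conv_nth)
        thus "x \<in> F f" using len by (auto simp: F_def f_def)
      qed
    qed
    ultimately show "W \<in> F ` P" by blast
  qed
  hence "card {W. W \<subseteq> X \<and> card W \<le> K} \<le> card (F ` P)"
    by (intro card_mono finite_imageI) (use assms in \<open>auto simp: P_def intro!: finite_PiE\<close>)
  also have "\<dots> \<le> card P" by (intro card_image_le) (use assms in \<open>auto simp: P_def intro!: finite_PiE\<close>)
  also have "card P = (card X + 1) ^ K"
    using assms by (simp add: P_def card_PiE card_image)
  finally show ?thesis .
qed

definition Vset :: "nat \<Rightarrow> nat \<Rightarrow> (nat + nat) set" where
  "Vset m n = Inl ` {..<m} \<union> Inr ` {..<n}"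

lemma bip_adj_Vset: "bip_adj m n G u w \<Longrightarrow> u \<in> Vset m n \<and> w \<in> Vset m n"
  by (cases u; cases w) (auto simp: Vset_def)

lemma path_internal:
  assumes "is_path m n G (Suc d) x y ps" "d \<ge> 1"
  shows "internal ps \<subseteq> Vset m n" "card (internal ps) \<le> d" "internal ps \<noteq> {}"
proof -
  have len: "length ps = Suc (Suc d)" using assms by (simp add: is_path_def)
  have adj: "\<And>i. i < Suc d \<Longrightarrow> bip_adj m n G (ps ! i) (ps ! Suc i)" using assms by (simp add: is_path_def)
  have "set ps \<subseteq> Vset m n"
  proof
    fix v assume "v \<in> set ps"
    then obtain i where i: "i < length ps" "ps ! i = v" by (metis in_set_conv_nth)
    show "v \<in> Vset m n"
    proof (cases "i < Suc d")
      case True then show ?thesis using bip_adj_Vset[OF adj[OF True]] i by simp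
    next
      case False
      hence "i = Suc d" using i len by simp
      then show ?thesis using bip_adj_Vset[OF adj[of d]] i by simp
    qed
  qed
  moreover have "internal ps \<subseteq> set ps" unfolding internal_def
    by (metis in_set_butlastD list.set_sel(2) subsetI tl_Nil set_empty2 empty_iff)
  ultimately show "internal ps \<subseteq> Vset m n" by blast
  have "length (butlast (tl ps)) = d" using len by simp
  thus "card (internal ps) \<le> d" unfolding internal_def by (metis card_length)
  have "butlast (tl ps) \<noteq> []" using \<open>length (butlast (tl ps)) = d\<close> assms(2) by (cases "butlast (tl ps)") auto
  thus "internal ps \<noteq> {}" by (simp add: internal_def)
qed

lemma greedy_paths:
  assumes rob: "\<And>W. W \<subseteq> Vset m n \<Longrightarrow> card W \<le> d * (N - 1) \<Longrightarrow>
                  \<exists>ps. is_path m n G (Suc d) x y ps \<and> internal ps \<inter> W = {}"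
    and d: "d \<ge> 1"
  shows "\<exists>P. finite P \<and> card P = N \<and> (\<forall>p\<in>P. is_path m n G (Suc d) x y p) \<and>
           (\<forall>p\<in>P. \<forall>q\<in>P. p \<noteq> q \<longrightarrow> internal p \<inter> internal q = {})"
proof -
  have "j \<le> N \<Longrightarrow> \<exists>P. finite P \<and> card P = j \<and> (\<forall>p\<in>P. is_path m n G (Suc d) x y p) \<and>
           (\<forall>p\<in>P. \<forall>q\<in>P. p \<noteq> q \<longrightarrow> internal p \<inter> internal q = {})" for j
  proof (induction j)
    case 0 then show ?case by (intro exI[of _ "{}"]) auto
  next
    case (Suc j)
    then obtain P where P: "finite P" "card P = j" "\<forall>p\<in>P. is_path m n G (Suc d) x y p"
      "\<forall>p\<in>P. \<forall>q\<in>P. p \<noteq> q \<longrightarrow> internal p \<inter> internal q = {}" by auto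
    define W where "W = \<Union>(internal ` P)"
    have WV: "W \<subseteq> Vset m n"
    proof -
      { fix p assume "p \<in> P"
        hence "internal p \<subseteq> Vset m n" using P(3) path_internal(1)[OF _ d] by blast }
      thus ?thesis unfolding W_def by blast
    qed
    have "card W \<le> (\<Sum>p\<in>P. card (internal p))" unfolding W_def by (rule card_UN_le[OF P(1)])
    also have "\<dots> \<le> (\<Sum>p\<in>P. d)" using P(3) path_internal(2)[OF _ d] by (intro sum_mono) auto
    also have "\<dots> = j * d" using P(2) by simp
    also have "\<dots> \<le> d * (N - 1)"
    proof -
      have "j \<le> N - 1" using Suc.prems by simp
      thus ?thesis by (simp add: mult.commute)
    qed
    finally obtain q where q: "is_path m n G (Suc d) x y q" "internal q \<inter> W = {}" using rob WV by blast
    have qP: "q \<notin> P"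
    proof
      assume "q \<in> P"
      hence "internal q \<subseteq> W" by (auto simp: W_def)
      thus False using q(2) path_internal(3)[OF q(1) d] by blast
    qed
    show ?case
    proof (intro exI[of _ "insert q P"] conjI)
      show "finite (insert q P)" using P by simp
      show "card (insert q P) = Suc j" using P qP by simp
      show "\<forall>p\<in>insert q P. is_path m n G (Suc d) x y p" using P q by simp
      show "\<forall>p\<in>insert q P. \<forall>q'\<in>insert q P. p \<noteq> q' \<longrightarrow> internal p \<inter> internal q' = {}"
        using P(4) q(2) unfolding W_def by blast
    qed
  qed
  thus ?thesis by blast
qed


definition lay :: "nat \<Rightarrow> nat \<Rightarrow> nat \<Rightarrow> nat \<Rightarrow> nat \<Rightarrow> (nat + nat) set \<Rightarrow> nat \<Rightarrow> (nat + nat) set" where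
  "lay m n r x y W j = (if j = 0 then {Inr x} else if j = 2*r+2 then {Inr y} else if j > 2*r+2 then {}
     else if odd j then Inl ` {a. a < m \<and> a mod (r+1) = (j-1) div 2} - W
     else Inr ` {b. b < n \<and> b mod r = (j-2) div 2} - W - {Inr x, Inr y})"

fun lidx :: "nat \<Rightarrow> nat \<Rightarrow> nat \<Rightarrow> nat + nat \<Rightarrow> nat" where
  "lidx r x y (Inl a) = 2 * (a mod (r+1)) + 1"
| "lidx r x y (Inr b) = (if b = x then 0 else if b = y then 2*r+2 else 2 * (b mod r) + 2)"

fun ecoord :: "nat + nat \<Rightarrow> nat + nat \<Rightarrow> nat \<times> nat" where
  "ecoord (Inl a) (Inr b) = (a, b)"
| "ecoord (Inr b) (Inl a) = (a, b)"
| "ecoord _ _ = (0, 0)"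

context
  fixes m n r x y :: nat and W :: "(nat + nat) set"
  assumes r: "r \<ge> 1" and xy: "x < n" "y < n" "x \<noteq> y"
begin

lemma lay_type:
  assumes "v \<in> lay m n r x y W j"
  shows "(\<exists>a. v = Inl a \<and> a < m \<and> odd j \<and> 1 \<le> j \<and> j \<le> 2*r+1) \<or> (\<exists>b. v = Inr b \<and> b < n \<and> even j \<and> j \<le> 2*r+2)"
  using assms xy by (auto simp: lay_def split: if_splits)

lemma lay_Inl: "Inl a \<in> lay m n r x y W j \<longleftrightarrow> odd j \<and> j \<le> 2*r+1 \<and> a < m \<and> a mod (r+1) = (j-1) div 2 \<and> Inl a \<notin> W"
  by (auto simp: lay_def)

lemma lay_Inr: "Inr b \<in> lay m n r x y W j \<longleftrightarrow>
   (j = 0 \<and> b = x) \<or> (j = 2*r+2 \<and> b = y) \<or>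
   (even j \<and> 2 \<le> j \<and> j \<le> 2*r \<and> b < n \<and> b mod r = (j-2) div 2 \<and> Inr b \<notin> W \<and> b \<noteq> x \<and> b \<noteq> y)"
  by (auto simp: lay_def)

lemma lay_idx:
  assumes "v \<in> lay m n r x y W j"
  shows "j = lidx r x y v"
proof -
  have o: "odd j \<Longrightarrow> j = 2 * ((j-1) div 2) + 1" by presburger
  have e: "even j \<Longrightarrow> j \<noteq> 0 \<Longrightarrow> j = 2 * ((j-2) div 2) + 2" by presburger
  show ?thesis
  proof (cases v)
    case (Inl a) thus ?thesis using assms o by (auto simp: lay_def split: if_splits)
  next
    case (Inr b) thus ?thesis using assms e xy by (auto simp: lay_def split: if_splits)
  qed
qed

lemma lay_unique:
  assumes "v \<in> lay m n r x y W i" "v \<in> lay m n r x y W j"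
  shows "i = j"
  using lay_idx[OF assms(1)] lay_idx[OF assms(2)] by simp

lemma lay_Inl_odd: "Inl a \<in> lay m n r x y W j \<Longrightarrow> odd j"
  using lay_type by blast

lemma lay_Inr_even: "Inr b \<in> lay m n r x y W j \<Longrightarrow> even j"
  using lay_type by blast

lemma lay_finite: "finite (lay m n r x y W j)"
  by (auto simp: lay_def)

lemma blk_coord:
  assumes "e \<in> blk (lay m n r x y W) ecoord i"
  shows "Inl (fst e) \<in> lay m n r x y W i \<union> lay m n r x y W (Suc i) \<and>
         Inr (snd e) \<in> lay m n r x y W i \<union> lay m n r x y W (Suc i) \<and>
         (Inl (fst e) \<in> lay m n r x y W i \<longleftrightarrow> Inr (snd e) \<in> lay m n r x y W (Suc i))"
proof -
  obtain u w where uw: "u \<in> lay m n r x y W i" "w \<in> lay m n r x y W (Suc i)" "e = ecoord u w"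
    using assms by (auto simp: blk_def)
  show ?thesis
    using lay_type[OF uw(1)] lay_type[OF uw(2)] uw by (auto dest: lay_Inl_odd lay_Inr_even)
qed

lemma blk_disj:
  assumes "i < j"
  shows "blk (lay m n r x y W) ecoord i \<inter> blk (lay m n r x y W) ecoord j = {}"
proof (rule ccontr)
  assume "\<not> ?thesis"
  then obtain e where e: "e \<in> blk (lay m n r x y W) ecoord i" "e \<in> blk (lay m n r x y W) ecoord j" by blast
  note A = blk_coord[OF e(1)] and B = blk_coord[OF e(2)]
  obtain ka where ka: "Inl (fst e) \<in> lay m n r x y W ka" "ka = i \<or> ka = Suc i" using A by auto
  obtain kb where kb: "Inr (snd e) \<in> lay m n r x y W kb" "kb = i \<or> kb = Suc i" using A by auto
  have "ka = j \<or> ka = Suc j" using B ka(1) lay_unique by blast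
  moreover have "kb = j \<or> kb = Suc j" using B kb(1) lay_unique by blast
  ultimately have "ka = Suc i" "kb = Suc i" "j = Suc i" using ka kb assms by auto
  moreover have "odd ka" using ka(1) lay_type by blast
  moreover have "even kb" using kb(1) lay_type by blast
  ultimately show False by simp
qed

lemma blk_inj: "inj_on (case_prod ecoord) (lay m n r x y W i \<times> lay m n r x y W (Suc i))"
proof (rule inj_onI, clarsimp)
  fix u w u' w'
  assume as: "u \<in> lay m n r x y W i" "w \<in> lay m n r x y W (Suc i)"
    "u' \<in> lay m n r x y W i" "w' \<in> lay m n r x y W (Suc i)" "ecoord u w = ecoord u' w'"
  show "u = u' \<and> w = w'"
    using lay_type[OF as(1)] lay_type[OF as(2)] lay_type[OF as(3)] lay_type[OF as(4)] as(5) by auto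
qed

lemma blk_sub: "blk (lay m n r x y W) ecoord i \<subseteq> {0..<m} \<times> {0..<n}"
proof
  fix e assume "e \<in> blk (lay m n r x y W) ecoord i"
  then obtain u w where uw: "u \<in> lay m n r x y W i" "w \<in> lay m n r x y W (Suc i)" "e = ecoord u w"
    by (auto simp: blk_def)
  show "e \<in> {0..<m} \<times> {0..<n}" using lay_type[OF uw(1)] lay_type[OF uw(2)] uw(3) by auto
qed

lemma lay_adj:
  assumes "u \<in> lay m n r x y W i" "w \<in> lay m n r x y W (Suc i)" "G (ecoord u w)"
  shows "bip_adj m n G u w"
  using lay_type[OF assms(1)] lay_type[OF assms(2)] assms(3) by auto

lemma reach_is_path:
  assumes "reach (lay m n r x y W) ecoord G (2*r+2) \<noteq> {}"
  shows "\<exists>ps. is_path m n G (2*r+2) (Inr x) (Inr y) ps \<and> internal ps \<inter> W = {}"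
proof -
  obtain w where w: "w \<in> reach (lay m n r x y W) ecoord G (2*r+2)" using assms by (meson ex_in_conv)
  obtain ps where ps: "length ps = Suc (2*r+2)" "\<forall>i\<le>2*r+2. ps ! i \<in> lay m n r x y W i"
     "last ps = w" "\<forall>i<2*r+2. G (ecoord (ps ! i) (ps ! Suc i))"
    using reach_path[OF w] by (elim exE conjE) (rule that)
  have wy: "w = Inr y" using w reach_sub[of "lay m n r x y W" ecoord G "2*r+2"]
    by (auto simp: lay_def)
  have ne: "ps \<noteq> []" using ps(1) by auto
  have "hd ps = Inr x" using ps(2)[rule_format, of 0] ne by (simp add: hd_conv_nth lay_def)
  moreover have "distinct ps"
    unfolding distinct_conv_nth
  proof (intro allI impI)
    fix i j assume ij: "i < length ps" "j < length ps" "i \<noteq> j"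
    show "ps ! i \<noteq> ps ! j"
    proof
      assume eq: "ps ! i = ps ! j"
      have "ps ! i \<in> lay m n r x y W i" using ps(1,2) ij(1) by simp
      moreover have "ps ! i \<in> lay m n r x y W j" using ps(1,2) ij(2) eq by simp
      ultimately show False using lay_unique ij(3) by blast
    qed
  qed
  moreover have "\<forall>i<2*r+2. bip_adj m n G (ps ! i) (ps ! Suc i)"
  proof (intro allI impI)
    fix i :: nat assume i: "i < 2*r+2"
    show "bip_adj m n G (ps ! i) (ps ! Suc i)"
      by (rule lay_adj[of _ i]) (use ps(2,4) i in auto)
  qed
  moreover have "internal ps \<inter> W = {}"
  proof -
    have "internal ps \<subseteq> (\<Union>i\<in>{1..2*r+1}. lay m n r x y W i)"
    proof
      fix v assume "v \<in> internal ps"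
      then obtain k where k: "k < length (butlast (tl ps))" "butlast (tl ps) ! k = v"
        unfolding internal_def by (metis in_set_conv_nth)
      have vk: "v = ps ! Suc k" "k < 2*r+1" using k ps(1) by (auto simp: nth_butlast nth_tl)
      have "ps ! Suc k \<in> lay m n r x y W (Suc k)" using ps(2) vk(2) by simp
      moreover have "Suc k \<in> {1..2*r+1}" using vk(2) by simp
      ultimately show "v \<in> (\<Union>i\<in>{1..2*r+1}. lay m n r x y W i)" using vk(1) by blast
    qed
    moreover have "\<And>i. i \<in> {1..2*r+1} \<Longrightarrow> lay m n r x y W i \<inter> W = {}" by (auto simp: lay_def)
    ultimately show ?thesis by blast
  qed
  ultimately show ?thesis using ps(1,3) wy unfolding is_path_def by auto
qed

lemma card_mod_class:
  assumes "c < k"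
  shows "card {a. a < N \<and> a mod k = c} \<ge> N div k"
proof -
  have "(\<lambda>i. i * k + c) ` {..<N div k} \<subseteq> {a. a < N \<and> a mod k = c}"
  proof
    fix a assume "a \<in> (\<lambda>i. i * k + c) ` {..<N div k}"
    then obtain i where i: "i < N div k" "a = i * k + c" by auto
    have "(i + 1) * k \<le> N div k * k" using i by (intro mult_right_mono) auto
    also have "\<dots> \<le> N" by (simp add: div_times_less_eq_dividend)
    finally have "a < N" using i assms by (simp add: algebra_simps)
    thus "a \<in> {a. a < N \<and> a mod k = c}" using i assms by simp
  qed
  moreover have "inj_on (\<lambda>i. i * k + c) {..<N div k}" using assms by (auto simp: inj_on_def)
  moreover have "finite {a. a < N \<and> a mod k = c}" by simp
  ultimately have "card ((\<lambda>i. i * k + c) ` {..<N div k}) \<le> card {a. a < N \<and> a mod k = c}"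
    by (intro card_mono)
  thus ?thesis using \<open>inj_on _ _\<close> by (simp add: card_image)
qed

lemma card_lay_U:
  assumes "odd j" "j \<le> 2*r+1" and fW: "finite W"
  shows "real (card (lay m n r x y W j)) \<ge> real (m div (r+1)) - real (card W)"
proof -
  have j0: "j \<noteq> 0" using assms(1) by presburger
  let ?A = "Inl ` {a. a < m \<and> a mod (r+1) = (j-1) div 2} :: (nat + nat) set"
  have eq: "lay m n r x y W j = ?A - W" using assms j0 by (simp add: lay_def)
  have c: "(j-1) div 2 < r + 1" using assms by auto
  have "card ?A \<ge> m div (r+1)" using card_mod_class[OF c, of m] by (simp add: card_image)
  moreover have "card (?A - W) \<ge> card ?A - card W" using diff_card_le_card_Diff[OF fW] by blast
  ultimately show ?thesis unfolding eq by linarith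
qed

lemma card_lay_V:
  assumes "even j" "2 \<le> j" "j \<le> 2*r" and fW: "finite W"
  shows "real (card (lay m n r x y W j)) \<ge> real (n div r) - real (card W) - 2"
proof -
  let ?A = "Inr ` {b. b < n \<and> b mod r = (j-2) div 2} :: (nat + nat) set"
  have eq: "lay m n r x y W j = ?A - (W \<union> {Inr x, Inr y})" using assms by (auto simp: lay_def)
  have c: "(j-2) div 2 < r" using assms by auto
  have "card ?A \<ge> n div r" using card_mod_class[OF c, of n] by (simp add: card_image)
  moreover have "card (?A - (W \<union> {Inr x, Inr y})) \<ge> card ?A - card (W \<union> {Inr x, Inr y})"
    using diff_card_le_card_Diff[of "W \<union> {Inr x, Inr y}"] fW by blast
  moreover have "card (W \<union> {Inr x, Inr y}) \<le> card W + 2"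
  proof -
    have "card {Inr x, Inr y :: nat + nat} \<le> 2" by (simp add: card_insert_if)
    thus ?thesis using card_Un_le[of W "{Inr x, Inr y}"] by linarith
  qed
  ultimately show ?thesis unfolding eq by linarith
qed

end


definition Nlow :: "real \<Rightarrow> real \<Rightarrow> nat \<Rightarrow> real" where
  "Nlow NU NV j = (if odd j then NU else NV)"

fun sth :: "real \<Rightarrow> real \<Rightarrow> nat \<Rightarrow> real \<Rightarrow> nat \<Rightarrow> real" where
  "sth NU NV r p 0 = 1"
| "sth NU NV r p (Suc j) = (if Suc j = 2*r+2 then 1 else Nlow NU NV (Suc j) * (1 - exp (- p * sth NU NV r p j)) / 2)"

definition dlt :: "real \<Rightarrow> real \<Rightarrow> nat \<Rightarrow> real \<Rightarrow> nat \<Rightarrow> real" where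
  "dlt NU NV r p j = (if Suc j = 2*r+2 then exp (- p * sth NU NV r p j) else exp (- sth NU NV r p (Suc j) / 4))"

lemma sth_nonneg: "0 \<le> NU \<Longrightarrow> 0 \<le> NV \<Longrightarrow> 0 \<le> p \<Longrightarrow> 0 \<le> sth NU NV r p j"
  by (induction j) (auto simp: Nlow_def intro!: mult_nonneg_nonneg)

lemma pow_le_exp: "0 \<le> p \<Longrightarrow> p \<le> 1 \<Longrightarrow> (1 - p) ^ k \<le> exp (- p * real k)"
proof -
  assume p: "0 \<le> p" "p \<le> 1"
  have "(1 - p) ^ k \<le> exp (- p) ^ k"
    by (intro power_mono) (use p exp_ge_add_one_self[of "-p"] in auto)
  thus ?thesis by (simp add: exp_of_nat_mult[symmetric] mult.commute)
qed

lemma triple_bound: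
  assumes r: "r \<ge> 1" and xy: "x < n" "y < n" "x \<noteq> y" and fW: "finite W"
    and p: "0 \<le> p" "p \<le> 1"
    and NU: "0 \<le> NU" "NU \<le> real (m div (r+1)) - real (card W)"
    and NV: "0 \<le> NV" "NV \<le> real (n div r) - real (card W) - 2"
  shows "measure_pmf.prob (random_bip m n p)
     {G. \<not> (\<exists>ps. is_path m n G (2*r+2) (Inr x) (Inr y) ps \<and> internal ps \<inter> W = {})}
     \<le> (\<Sum>j<2*r+2. dlt NU NV r p j)"
proof -
  let ?L = "lay m n r x y W"
  let ?S = "{0..<m} \<times> {0..<n}"
  let ?M = "Pi_pmf ?S False (\<lambda>_. bernoulli_pmf p)"
  let ?s = "sth NU NV r p"
  have s0: "\<And>j. 0 \<le> ?s j" using sth_nonneg NU NV p by blast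
  have sub: "{G. \<not> (\<exists>ps. is_path m n G (2*r+2) (Inr x) (Inr y) ps \<and> internal ps \<inter> W = {})}
      \<subseteq> {G. reach ?L ecoord G (2*r+2) = {}}"
    using reach_is_path[OF r xy] by blast
  have "measure_pmf.prob ?M {G. reach ?L ecoord G (2*r+2) = {}} \<le> (\<Sum>j<2*r+2. dlt NU NV r p j)"
  proof (rule explore_bound)
    show "finite ?S" by simp
    show "?s 0 \<le> real (card (?L 0))" by (simp add: lay_def)
    show "0 < ?s (2*r+2)" by simp
  next
    fix j assume j: "j < 2*r+2"
    show "measure_pmf.prob ?M {G. ?s j \<le> real (card (reach ?L ecoord G j)) \<and>
             real (card (reach ?L ecoord G (Suc j))) < ?s (Suc j)} \<le> dlt NU NV r p j"
    proof (rule step_bound)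
      show "finite ?S" by simp
      show "blk ?L ecoord j \<subseteq> ?S" by (rule blk_sub[OF r xy])
      show "\<And>i. i < j \<Longrightarrow> blk ?L ecoord i \<inter> blk ?L ecoord j = {}" by (rule blk_disj[OF r xy])
      show "finite (?L j)" "finite (?L (Suc j))" by (rule lay_finite[OF r xy])+
      show "inj_on (case_prod ecoord) (?L j \<times> ?L (Suc j))" by (rule blk_inj[OF r xy])
      show "0 \<le> p" "p \<le> 1" by (rule p)+
      show "0 \<le> dlt NU NV r p j" by (simp add: dlt_def)
    next
      fix R assume R: "R \<subseteq> ?L j" "?s j \<le> real (card R)"
      define q where "q = 1 - (1 - p) ^ card R"
      have q01: "0 \<le> q" "q \<le> 1" using p by (auto simp: q_def intro: power_le_one)
      have qlow: "q \<ge> 1 - exp (- p * ?s j)"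
      proof -
        have "(1 - p) ^ card R \<le> exp (- p * real (card R))" by (rule pow_le_exp[OF p])
        also have "\<dots> \<le> exp (- p * ?s j)" using R(2) p by (simp add: mult_left_mono)
        finally show ?thesis by (simp add: q_def)
      qed
      show "measure_pmf.prob (Pi_pmf (?L (Suc j)) False (\<lambda>_. bernoulli_pmf (1 - (1 - p) ^ card R)))
          {f. real (card {w \<in> ?L (Suc j). f w}) < ?s (Suc j)} \<le> dlt NU NV r p j"
      proof (cases "Suc j = 2*r+2")
        case True
        have Ly: "?L (Suc j) = {Inr y}" using True by (simp add: lay_def)
        have "{f. real (card {w \<in> ?L (Suc j). f w}) < ?s (Suc j)} = {f. \<forall>w\<in>?L (Suc j). \<not> f w}"
          using True Ly by auto
        hence "measure_pmf.prob (Pi_pmf (?L (Suc j)) False (\<lambda>_. bernoulli_pmf q))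
            {f. real (card {w \<in> ?L (Suc j). f w}) < ?s (Suc j)} = (1 - q) ^ card (?L (Suc j))"
          using prob_all_false[OF lay_finite[OF r xy] q01] by simp
        also have "\<dots> = (1 - p) ^ card R" using Ly by (simp add: q_def)
        also have "\<dots> \<le> exp (- p * real (card R))" by (rule pow_le_exp[OF p])
        also have "\<dots> \<le> exp (- p * ?s j)" using R(2) p by (simp add: mult_left_mono)
        finally show ?thesis using True by (simp add: dlt_def q_def)
      next
        case False
        hence j1: "Suc j \<le> 2*r+1" using j by simp
        let ?N = "real (card (?L (Suc j)))"
        have Nlow: "Nlow NU NV (Suc j) \<le> ?N" "0 \<le> Nlow NU NV (Suc j)"
        proof -
          show "0 \<le> Nlow NU NV (Suc j)" using NU NV by (simp add: Nlow_def)
          show "Nlow NU NV (Suc j) \<le> ?N"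
          proof (cases "odd (Suc j)")
            case True
            then show ?thesis using card_lay_U[OF r xy True j1 fW, where m=m] NU by (simp add: Nlow_def)
          next
            case False
            hence "2 \<le> Suc j" "Suc j \<le> 2*r" using j1 by presburger+
            then show ?thesis using card_lay_V[OF r xy _ _ _ fW, of "Suc j" m] False NV by (simp add: Nlow_def)
          qed
        qed
        have sS: "?s (Suc j) = Nlow NU NV (Suc j) * (1 - exp (- p * ?s j)) / 2" using False by simp
        have le1: "?s (Suc j) \<le> ?N * q / 2"
        proof -
          have "0 \<le> 1 - exp (- p * ?s j)" using p s0[of j] by simp
          hence "Nlow NU NV (Suc j) * (1 - exp (- p * ?s j)) \<le> ?N * q"
            using Nlow qlow by (intro mult_mono) auto
          thus ?thesis using sS by simp
        qed
        have "measure_pmf.prob (Pi_pmf (?L (Suc j)) False (\<lambda>_. bernoulli_pmf q))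
            {f. real (card {w \<in> ?L (Suc j). f w}) < ?s (Suc j)}
          \<le> measure_pmf.prob (Pi_pmf (?L (Suc j)) False (\<lambda>_. bernoulli_pmf q))
            {f. real (card {w \<in> ?L (Suc j). f w}) \<le> ?N * q / 2}"
          using le1 by (intro measure_pmf.finite_measure_mono) auto
        also have "\<dots> \<le> exp (- ?N * q / 8)" by (rule chernoff_lower[OF lay_finite[OF r xy] q01])
        also have "\<dots> \<le> exp (- ?s (Suc j) / 4)" using le1 by simp
        finally show ?thesis using False by (simp add: dlt_def q_def)
      qed
    qed
  qed
  moreover have "measure_pmf.prob ?M {G. \<not> (\<exists>ps. is_path m n G (2*r+2) (Inr x) (Inr y) ps \<and> internal ps \<inter> W = {})}
     \<le> measure_pmf.prob ?M {G. reach ?L ecoord G (2*r+2) = {}}"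
    by (intro measure_pmf.finite_measure_mono sub) auto
  ultimately show ?thesis by (simp add: random_bip_def)
qed


lemma all_bound:
  fixes k :: real and r :: nat
  defines "N \<equiv> nat \<lceil>k\<rceil>"
  defines "Kw \<equiv> (2*r+1) * (N - 1)"
  assumes r: "r \<ge> 1" and p: "0 \<le> p" "p \<le> 1"
    and NU: "0 \<le> NU" "NU \<le> real (m div (r+1)) - real Kw"
    and NV: "0 \<le> NV" "NV \<le> real (n div r) - real Kw - 2"
  shows "measure_pmf.prob (random_bip m n p)
     {G. \<not> (\<forall>x<n. \<forall>y<n. x \<noteq> y \<longrightarrow> many_disjoint_paths m n G (2*r+2) k (Inr x) (Inr y))}
     \<le> real n * real n * (real (m + n) + 1) ^ Kw * (\<Sum>j<2*r+2. dlt NU NV r p j)"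
proof -
  define WS where "WS = {W. W \<subseteq> Vset m n \<and> card W \<le> Kw}"
  define I where "I = {..<n} \<times> {..<n} \<times> WS"
  define B where "B = (\<lambda>(x,y,W). {G. x \<noteq> y \<and> \<not> (\<exists>ps. is_path m n G (2*r+2) (Inr x) (Inr y) ps \<and> internal ps \<inter> W = {})})"
  define bnd where "bnd = (\<Sum>j<2*r+2. dlt NU NV r p j)"
  have finV: "finite (Vset m n)" by (simp add: Vset_def)
  have cardV: "card (Vset m n) \<le> m + n" unfolding Vset_def
    by (rule order_trans[OF card_Un_le]) (simp add: card_image)
  have finWS: "finite WS" by (rule finite_subset[of _ "Pow (Vset m n)"]) (auto simp: WS_def finV)
  have cardWS: "real (card WS) \<le> (real (m + n) + 1) ^ Kw"
  proof -
    have "card WS \<le> (card (Vset m n) + 1) ^ Kw" unfolding WS_def by (rule card_small_subsets[OF finV])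
    also have "\<dots> \<le> (m + n + 1) ^ Kw" using cardV by (intro power_mono) auto
    finally have "real (card WS) \<le> real ((m + n + 1) ^ Kw)" by (simp only: of_nat_le_iff)
    moreover have "real ((m + n + 1) ^ Kw) = (real (m + n) + 1) ^ Kw"
    proof -
      have e: "real (m + n + 1) = real (m + n) + 1" by linarith
      show ?thesis by (simp only: of_nat_power e)
    qed
    ultimately show ?thesis by linarith
  qed
  have finI: "finite I" using finWS by (simp add: I_def)
  have sub: "{G. \<not> (\<forall>x<n. \<forall>y<n. x \<noteq> y \<longrightarrow> many_disjoint_paths m n G (2*r+2) k (Inr x) (Inr y))}
             \<subseteq> (\<Union>i\<in>I. B i)"
  proof
    fix G assume G: "G \<in> {G. \<not> (\<forall>x<n. \<forall>y<n. x \<noteq> y \<longrightarrow> many_disjoint_paths m n G (2*r+2) k (Inr x) (Inr y))}"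
    then obtain x y where xy: "x < n" "y < n" "x \<noteq> y" "\<not> many_disjoint_paths m n G (2*r+2) k (Inr x) (Inr y)" by blast
    show "G \<in> (\<Union>i\<in>I. B i)"
    proof (rule ccontr)
      assume nB: "G \<notin> (\<Union>i\<in>I. B i)"
      have rob: "\<exists>ps. is_path m n G (Suc (2*r+1)) (Inr x) (Inr y) ps \<and> internal ps \<inter> W = {}"
        if "W \<subseteq> Vset m n" "card W \<le> (2*r+1) * (N - 1)" for W
      proof -
        have "(x, y, W) \<in> I" using that xy by (simp add: I_def WS_def Kw_def)
        hence "G \<notin> B (x, y, W)" using nB by blast
        thus ?thesis using xy by (simp add: B_def)
      qed
      have "\<exists>P. finite P \<and> card P = N \<and> (\<forall>p\<in>P. is_path m n G (Suc (2*r+1)) (Inr x) (Inr y) p) \<and>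
        (\<forall>p\<in>P. \<forall>q\<in>P. p \<noteq> q \<longrightarrow> internal p \<inter> internal q = {})"
        by (rule greedy_paths[OF rob]) simp_all
      then obtain P where PP: "finite P \<and> card P = N \<and> (\<forall>p\<in>P. is_path m n G (Suc (2*r+1)) (Inr x) (Inr y) p) \<and>
        (\<forall>p\<in>P. \<forall>q\<in>P. p \<noteq> q \<longrightarrow> internal p \<inter> internal q = {})"
        by (rule exE)
      note P = conjunct1[OF PP] conjunct1[OF conjunct2[OF PP]] conjunct1[OF conjunct2[OF conjunct2[OF PP]]]
        conjunct2[OF conjunct2[OF conjunct2[OF PP]]]
      have "real (card P) \<ge> k" using real_nat_ceiling_ge[of k] P(2) by (simp add: N_def)
      hence "many_disjoint_paths m n G (2*r+2) k (Inr x) (Inr y)"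
        unfolding many_disjoint_paths_def
        by (intro exI[of _ P] conjI) (use P in \<open>simp_all add: \<open>real (card P) \<ge> k\<close>\<close>)
      thus False using xy(4) by blast
    qed
  qed
  have Bi: "measure_pmf.prob (random_bip m n p) (B i) \<le> bnd" if "i \<in> I" for i
  proof -
    obtain x y W where i: "i = (x, y, W)" by (cases i)
    have xyW: "x < n" "y < n" "W \<subseteq> Vset m n" "card W \<le> Kw" using that by (auto simp: i I_def WS_def)
    have fW: "finite W" using xyW(3) finV finite_subset by blast
    show ?thesis
    proof (cases "x = y")
      case True
      hence "B i = {}" by (simp add: B_def i)
      moreover have "0 \<le> bnd" unfolding bnd_def dlt_def by (intro sum_nonneg) auto
      ultimately show ?thesis by simp
    next
      case False
      have "B i = {G. \<not> (\<exists>ps. is_path m n G (2*r+2) (Inr x) (Inr y) ps \<and> internal ps \<inter> W = {})}"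
        using False by (simp add: B_def i)
      also have "measure_pmf.prob (random_bip m n p) \<dots> \<le> bnd"
        unfolding bnd_def
        by (rule triple_bound[OF r xyW(1,2) False fW p NU(1) _ NV(1)]) (use NU(2) NV(2) xyW(4) in auto)
      finally show ?thesis .
    qed
  qed
  have "measure_pmf.prob (random_bip m n p)
     {G. \<not> (\<forall>x<n. \<forall>y<n. x \<noteq> y \<longrightarrow> many_disjoint_paths m n G (2*r+2) k (Inr x) (Inr y))}
     \<le> measure_pmf.prob (random_bip m n p) (\<Union>i\<in>I. B i)"
    by (intro measure_pmf.finite_measure_mono sub) auto
  also have "\<dots> \<le> (\<Sum>i\<in>I. measure_pmf.prob (random_bip m n p) (B i))"
    by (intro measure_pmf.finite_measure_subadditive_finite finI) auto
  also have "\<dots> \<le> (\<Sum>i\<in>I. bnd)" by (intro sum_mono Bi)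
  also have "\<dots> = real n * real n * real (card WS) * bnd" by (simp add: I_def card_cartesian_product)
  also have "\<dots> \<le> real n * real n * (real (m + n) + 1) ^ Kw * bnd"
  proof -
    have "0 \<le> bnd" unfolding bnd_def dlt_def by (intro sum_nonneg) auto
    thus ?thesis using cardWS by (intro mult_right_mono mult_left_mono) auto
  qed
  finally show ?thesis by (simp add: bnd_def)
qed


lemma one_minus_exp_ge:
  assumes "0 \<le> (z::real)"
  shows "min z 1 / 2 \<le> 1 - exp (- z)"
proof -
  have "exp z \<ge> 1 + z" by simp
  hence "exp (- z) \<le> 1 / (1 + z)" using assms by (simp add: exp_minus field_simps)
  hence "1 - exp (- z) \<ge> z / (1 + z)" using assms by (simp add: field_simps)
  moreover have "z / (1 + z) \<ge> min z 1 / 2"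
  proof (cases "z \<le> 1")
    case True
    hence "z * z \<le> z * 1" using assms by (intro mult_left_mono) auto
    thus ?thesis using True assms by (auto simp: min_def field_simps)
  qed (use assms in \<open>auto simp: min_def field_simps\<close>)
  ultimately show ?thesis by linarith
qed

lemma sth_lower:
  assumes p: "0 \<le> p" "p \<le> 1" and N: "0 \<le> NU" "0 \<le> NV" "NU * p / 4 \<ge> 1" "NV * p / 4 \<ge> 1"
  shows "j \<le> 2*r+1 \<Longrightarrow> sth NU NV r p j \<ge> min (\<Prod>i\<in>{1..j}. Nlow NU NV i * p / 4) (min NU NV / 4)"
proof (induction j)
  case 0
  then show ?case by simp
next
  case (Suc j)
  let ?s = "sth NU NV r p j"
  let ?Nl = "Nlow NU NV (Suc j)"
  let ?a = "?Nl * p / 4"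
  let ?P = "\<Prod>i\<in>{1..j}. Nlow NU NV i * p / 4"
  let ?M = "min NU NV / 4"
  have IH: "?s \<ge> min ?P ?M" using Suc by simp
  have s0: "?s \<ge> 0" using sth_nonneg N p by blast
  have a1: "?a \<ge> 1" using N by (simp add: Nlow_def)
  have Nl0: "?Nl \<ge> 0" using N by (simp add: Nlow_def)
  have NlM: "?Nl / 4 \<ge> ?M" by (simp add: Nlow_def)
  have eq: "sth NU NV r p (Suc j) = ?Nl * (1 - exp (- p * ?s)) / 2" using Suc.prems by simp
  have "?Nl * (min (p * ?s) 1 / 2) \<le> ?Nl * (1 - exp (- p * ?s))"
    using one_minus_exp_ge[of "p * ?s"] p s0 Nl0 by (intro mult_left_mono) auto
  hence ge: "sth NU NV r p (Suc j) \<ge> ?Nl * min (p * ?s) 1 / 4" using eq by simp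
  have P1: "?P \<ge> 1"
    by (rule prod_ge_1) (use N in \<open>auto simp: Nlow_def\<close>)
  have prodS: "(\<Prod>i\<in>{1..Suc j}. Nlow NU NV i * p / 4) = ?a * ?P"
    by (simp add: prod.nat_ivl_Suc')
  have "min (?a * ?P) ?M \<le> ?Nl * min (p * ?s) 1 / 4"
  proof (cases "p * ?s \<le> 1")
    case True
    hence "?Nl * min (p * ?s) 1 / 4 = ?a * ?s" by (simp add: min_def)
    moreover have "?a * ?s \<ge> min (?a * ?P) ?M"
    proof (cases "?P \<le> ?M")
      case True
      hence "?s \<ge> ?P" using IH by simp
      hence "?a * ?s \<ge> ?a * ?P" using a1 by (intro mult_left_mono) auto
      thus ?thesis by simp
    next
      case False
      hence "min ?P ?M = ?M" by (intro min.absorb2) linarith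
      hence "?s \<ge> ?M" using IH by linarith
      hence "?a * ?s \<ge> ?a * ?M" using a1 by (intro mult_left_mono) auto
      moreover have "?a * ?M \<ge> 1 * ?M" using a1 N by (intro mult_right_mono) auto
      moreover have "min (?a * ?P) ?M \<le> ?M" by (rule min.cobounded2)
      ultimately show ?thesis by linarith
    qed
    ultimately show ?thesis by linarith
  next
    case False
    hence "?Nl * min (p * ?s) 1 / 4 = ?Nl / 4" by (simp add: min_def)
    moreover have "min (?a * ?P) ?M \<le> ?M" by (rule min.cobounded2)
    ultimately show ?thesis using NlM by linarith
  qed
  thus ?case using ge prodS by linarith
qed

lemma prod_alt:
  "(\<Prod>i\<in>{1..2*r+1}. if odd i then (a::real) else b) = a ^ (r+1) * b ^ r"
proof (induction r)
  case 0 then show ?case by simp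
next
  case (Suc r)
  have "{1..2 * Suc r + 1} = insert (2*r+3) (insert (2*r+2) {1..2*r+1})" by auto
  hence "(\<Prod>i\<in>{1..2 * Suc r + 1}. if odd i then a else b) =
     (if odd (2*r+3) then a else b) * ((if odd (2*r+2) then a else b) * (\<Prod>i\<in>{1..2*r+1}. if odd i then a else b))"
    by simp
  also have "\<dots> = a * (b * (a ^ (r+1) * b ^ r))" using Suc by simp
  finally show ?case by (simp add: algebra_simps)
qed

lemma prod_ge_factor:
  assumes "finite A" "i \<in> A" "\<And>j. j \<in> A \<Longrightarrow> f j \<ge> (1::real)"
  shows "(\<Prod>j\<in>A. f j) \<ge> f i"
proof -
  have "(\<Prod>j\<in>A. f j) = f i * (\<Prod>j\<in>A - {i}. f j)" using assms by (simp add: prod.remove)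
  moreover have "(\<Prod>j\<in>A - {i}. f j) \<ge> 1" using assms by (intro prod_ge_1) auto
  moreover have "f i \<ge> 0" using assms(2,3) by (meson order_trans zero_le_one)
  ultimately show ?thesis by (metis mult_left_mono mult.right_neutral)
qed

lemma min_scale: "0 \<le> (c::real) \<Longrightarrow> min (a * c) (b * c) = min a b * c"
proof (cases "a \<le> b")
  case True
  assume c: "0 \<le> c"
  hence "a * c \<le> b * c" using True by (intro mult_right_mono)
  thus ?thesis using True by (simp add: min_def)
next
  case False
  assume c: "0 \<le> c"
  hence "b * c \<le> a * c" using False by (intro mult_right_mono) auto
  thus ?thesis using False by (simp add: min_def)
qed

lemma dlt_sum:
  assumes p: "0 \<le> p" "p \<le> 1" and N: "0 \<le> NU" "0 \<le> NV" "NU * p / 4 \<ge> 1" "NV * p / 4 \<ge> 1"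
    and Phi: "0 \<le> \<Phi>" "\<Phi> \<le> min (NU * p / 4) (NV * p / 4) / 4"
      "\<Phi> \<le> p * (NU * p / 4) ^ (r+1) * (NV * p / 4) ^ r"
  shows "(\<Sum>j<2*r+2. dlt NU NV r p j) \<le> real (2*r+2) * exp (- \<Phi>)"
proof -
  let ?a = "\<lambda>i. Nlow NU NV i * p / 4"
  let ?amin = "min (NU * p / 4) (NV * p / 4)"
  let ?Mn = "min NU NV / 4"
  have a1: "\<And>i. ?a i \<ge> 1" using N by (simp add: Nlow_def)
  have aMin: "\<And>i. ?a i \<ge> ?amin" unfolding Nlow_def by (auto simp del: min_less_iff_conj)
  have Mn: "?Mn \<ge> ?amin"
  proof -
    have "min NU NV * p \<le> min NU NV * 1" using p N by (intro mult_left_mono) auto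
    moreover have "min (NU * p / 4) (NV * p / 4) = min NU NV * p / 4"
      using min_scale[of "p/4" NU NV] p by (simp add: mult.assoc)
    ultimately show ?thesis by simp
  qed
  have each: "dlt NU NV r p j \<le> exp (- \<Phi>)" if j: "j < 2*r+2" for j
  proof (cases "Suc j = 2*r+2")
    case True
    hence jj: "j = 2*r+1" by simp
    have s: "sth NU NV r p j \<ge> min (\<Prod>i\<in>{1..j}. ?a i) ?Mn"
      by (rule sth_lower[OF p N]) (use jj in simp)
    have P: "(\<Prod>i\<in>{1..j}. ?a i) = (NU * p / 4) ^ (r+1) * (NV * p / 4) ^ r"
    proof -
      have "(\<Prod>i\<in>{1..j}. ?a i) = (\<Prod>i\<in>{1..2*r+1}. if odd i then NU * p / 4 else NV * p / 4)"
        using jj by (intro prod.cong) (auto simp: Nlow_def)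
      thus ?thesis by (simp only: prod_alt)
    qed
    have "p * sth NU NV r p j \<ge> p * min (\<Prod>i\<in>{1..j}. ?a i) ?Mn"
      using s p by (intro mult_left_mono) auto
    moreover have "p * min (\<Prod>i\<in>{1..j}. ?a i) ?Mn = min (p * (\<Prod>i\<in>{1..j}. ?a i)) (p * ?Mn)"
      using min_scale[of p "\<Prod>i\<in>{1..j}. ?a i" ?Mn] p by (simp add: mult.commute)
    moreover have "p * ?Mn = ?amin"
      using min_scale[of "p/4" NU NV] p by (simp add: mult.commute)
    moreover have "p * (\<Prod>i\<in>{1..j}. ?a i) \<ge> \<Phi>"
    proof -
      have "p * (\<Prod>i\<in>{1..j}. ?a i) = p * ((NU * p / 4) ^ (r+1) * (NV * p / 4) ^ r)" by (simp only: P)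
      thus ?thesis using Phi(3) by (simp only: mult.assoc)
    qed
    moreover have "?amin \<ge> \<Phi>" using Phi(1,2) by linarith
    ultimately have "\<Phi> \<le> min (p * (\<Prod>i\<in>{1..j}. ?a i)) ?amin" "p * sth NU NV r p j \<ge> min (p * (\<Prod>i\<in>{1..j}. ?a i)) ?amin"
      by (simp_all only: min.boundedI)
    hence "p * sth NU NV r p j \<ge> \<Phi>" by linarith
    thus ?thesis using True by (simp add: dlt_def)
  next
    case False
    hence jj: "Suc j \<le> 2*r+1" using j by simp
    have s: "sth NU NV r p (Suc j) \<ge> min (\<Prod>i\<in>{1..Suc j}. ?a i) ?Mn"
      by (rule sth_lower[OF p N jj])
    have "(\<Prod>i\<in>{1..Suc j}. ?a i) \<ge> ?a (Suc j)" by (rule prod_ge_factor) (use a1 in auto)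
    hence "sth NU NV r p (Suc j) \<ge> ?amin" using s aMin[of "Suc j"] Mn by linarith
    hence "sth NU NV r p (Suc j) / 4 \<ge> \<Phi>" using Phi by linarith
    thus ?thesis using False by (simp add: dlt_def)
  qed
  have "(\<Sum>j<2*r+2. dlt NU NV r p j) \<le> (\<Sum>j<2*r+2. exp (- \<Phi>))" by (intro sum_mono each) auto
  also have "\<dots> = real (2*r+2) * exp (- \<Phi>)" by simp
  finally show ?thesis .
qed


lemma real_div_ge: "0 < b \<Longrightarrow> real (a div b) \<ge> real a / real b - 1"
proof -
  assume b: "0 < b"
  have "a = a div b * b + a mod b" by simp
  hence "real a = real (a div b) * real b + real (a mod b)" by (metis of_nat_add of_nat_mult)
  moreover have "real (a mod b) < real b" using b by simp
  ultimately have "real a < (real (a div b) + 1) * real b" by (simp add: algebra_simps)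
  thus ?thesis using b by (simp add: field_simps)
qed

lemma ln_le_self: "0 < (x::real) \<Longrightarrow> ln x \<le> x"
  using ln_le_minus_one[of x] by linarith

lemma ln3_le: "ln (3::real) \<le> 2"
proof -
  have "(3::real) \<le> exp 2" using exp_ge_add_one_self[of "2::real"] by linarith
  thus ?thesis by (metis ln_exp ln_le_cancel_iff exp_gt_zero zero_less_numeral)
qed

lemma ln2_le1: "ln (2::real) \<le> 1"
  using ln_2_less_1 by simp

lemma final_bound_arith:
  fixes n m r Kw :: nat and C1 t \<Phi> :: real
  assumes n: "n \<ge> 1" and mn: "m \<le> n" and t: "t \<ge> 1" "ln (real n) \<le> t"
    and Kw: "real Kw \<le> real (2*r+1) * C1 * t" and C1: "C1 \<ge> 1"
    and big: "(5 + 3 * real (2*r+1) * C1 + 2 * real r) * t^2 \<le> \<Phi>"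
  shows "real n * real n * (real (m + n) + 1) ^ Kw * (real (2*r+2) * exp (- \<Phi>)) \<le> 1 / real n"
proof -
  define X where "X = real n ^ 3 * (real (m + n) + 1) ^ Kw * real (2*r+2)"
  have Xpos: "X > 0" using n by (simp add: X_def)
  have lnX: "ln X = 3 * ln (real n) + real Kw * ln (real (m + n) + 1) + ln (real (2*r+2))"
    using n by (simp add: X_def ln_mult ln_realpow)
  have l1: "ln (real (m + n) + 1) \<le> 2 + t"
  proof -
    have "real (m + n) + 1 \<le> 3 * real n" using mn n by simp
    hence "ln (real (m + n) + 1) \<le> ln (3 * real n)" by (intro ln_mono) auto
    also have "\<dots> = ln 3 + ln (real n)" using n by (simp add: ln_mult)
    finally show ?thesis using ln3_le t by linarith
  qed
  have l2: "ln (real (2*r+2)) \<le> 2 * real r + 2" using ln_le_self[of "real (2*r+2)"] by simp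
  have "ln X \<le> 3 * t + real Kw * (2 + t) + (2 * real r + 2)"
  proof -
    have "real Kw * ln (real (m + n) + 1) \<le> real Kw * (2 + t)" using l1 by (intro mult_left_mono) auto
    thus ?thesis using lnX l2 t by linarith
  qed
  also have "\<dots> \<le> 3 * t + real (2*r+1) * C1 * t * (2 + t) + (2 * real r + 2)"
    using Kw t by (intro add_mono mult_right_mono) auto
  also have "\<dots> \<le> (5 + 3 * real (2*r+1) * C1 + 2 * real r) * t^2"
  proof -
    have tt: "t \<le> t^2" "1 \<le> t^2" using t by (auto simp: power2_eq_square) (metis mult_left_mono order_trans mult.right_neutral less_eq_real_def zero_less_one)
    define A where "A = real (2*r+1) * C1"
    have A0: "A \<ge> 0" using C1 by (simp add: A_def)
    have "A * t * (2 + t) = 2 * A * t + A * t^2" by (simp add: algebra_simps power2_eq_square)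
    also have "\<dots> \<le> 2 * A * t^2 + A * t^2" using tt A0 by (intro add_mono mult_left_mono) auto
    finally have "A * t * (2 + t) \<le> 3 * A * t^2" by simp
    moreover have "3 * t \<le> 3 * t^2" using tt by simp
    moreover have "2 * real r + 2 \<le> (2 * real r + 2) * t^2" using tt by simp
    ultimately show ?thesis unfolding A_def by (simp add: algebra_simps)
  qed
  also have "\<dots> \<le> \<Phi>" by (rule big)
  finally have "ln X \<le> \<Phi>" .
  hence "X \<le> exp \<Phi>" using Xpos by (metis exp_ln exp_le_cancel_iff)
  hence "X * exp (- \<Phi>) \<le> 1" by (simp add: exp_minus field_simps)
  moreover have "real n * real n * (real (m + n) + 1) ^ Kw * (real (2*r+2) * exp (- \<Phi>)) = X * exp (- \<Phi>) / real n"
    using n by (simp add: X_def field_simps power3_eq_cube)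
  ultimately show ?thesis using n by (simp add: divide_right_mono)
qed


lemma final_n:
  fixes n m r :: nat and C1 P1 :: real
  defines "d \<equiv> 2*r+1"
  defines "t \<equiv> log 2 (real n)"
  defines "p \<equiv> C1 * P1"
  assumes r: "r \<ge> 1" and C1: "C1 \<ge> 1" and n: "n \<ge> 2" and m: "m \<ge> 1" "real m \<le> real n"
    and P1: "P1 > 0" "p \<le> 1"
    and mp1: "P1 * real m \<ge> t^4"
    and ident: "P1 ^ d * (real m * real n) ^ r = log 2 (real m * real n)"
    and big1: "t^4 \<ge> 2 * real (r+1) * (3 + real d * C1 * t)"
    and big2: "(5 + 3 * real d * C1 + 2 * real r) * t^2 \<le> t^4 / (32 * real (r+1)) ^ d"
  shows "measure_pmf.prob (random_bip m n p)
     {G. \<not> (\<forall>x<n. \<forall>y<n. x \<noteq> y \<longrightarrow> many_disjoint_paths m n G (2*r+2) (C1 * t) (Inr x) (Inr y))}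
     \<le> 1 / real n"
proof -
  define k where "k = C1 * t"
  define N where "N = nat \<lceil>k\<rceil>"
  define Kw where "Kw = (2*r+1) * (N - 1)"
  define NU where "NU = real m / (2 * real (r+1))"
  define NV where "NV = real n / (2 * real r)"
  define \<Phi> where "\<Phi> = t^4 / (32 * real (r+1)) ^ d"
  have t1: "t \<ge> 1" using n by (simp add: t_def)
  have lnt: "ln (real n) \<le> t"
  proof -
    have "ln (real n) = t * ln 2" using n by (simp add: t_def log_def)
    also have "\<dots> \<le> t * 1" using t1 ln2_le1 by (intro mult_left_mono) auto
    finally show ?thesis by simp
  qed
  have d3: "real d \<ge> 3" using r by (simp add: d_def)
  have k0: "k \<ge> 0" using C1 t1 by (simp add: k_def)
  have KwB: "real Kw \<le> real d * C1 * t"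
  proof -
    have "real (N - 1) \<le> k"
    proof (cases "N = 0")
      case True then show ?thesis using k0 by simp
    next
      case False
      hence "real (N - 1) = real N - 1" by simp
      also have "real N = of_int \<lceil>k\<rceil>" using k0 by (simp add: N_def)
      finally show ?thesis by linarith
    qed
    hence "real d * real (N - 1) \<le> real d * k" by (intro mult_left_mono) auto
    moreover have "real Kw = real d * real (N - 1)" unfolding Kw_def d_def by (simp only: of_nat_mult)
    ultimately have "real Kw \<le> real d * k" by simp
    thus ?thesis by (simp add: k_def mult.assoc)
  qed
  have P1le: "P1 \<le> 1"
  proof -
    have "1 * P1 \<le> C1 * P1" using P1 C1 by (intro mult_right_mono) auto
    thus ?thesis using P1(2) unfolding p_def by linarith
  qed
  have p0: "p \<ge> 0" using P1 C1 by (simp add: p_def)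
  have mt: "real m \<ge> t^4"
  proof -
    have "P1 * real m \<le> 1 * real m" using P1le by (intro mult_right_mono) auto
    thus ?thesis using mp1 by simp
  qed
  have dct: "real d * C1 * t \<ge> 3"
  proof -
    have "real d * C1 * t \<ge> 3 * 1 * 1" using d3 C1 t1 by (intro mult_mono) auto
    thus ?thesis by simp
  qed
  have big1': "t^4 / (2 * real (r+1)) \<ge> 3 + real Kw"
  proof -
    have "2 * real (r+1) * (3 + real Kw) \<le> 2 * real (r+1) * (3 + real d * C1 * t)"
      using KwB by (intro mult_left_mono) auto
    hence "2 * real (r+1) * (3 + real Kw) \<le> t^4" using big1 by linarith
    thus ?thesis by (simp add: pos_le_divide_eq mult.commute)
  qed
  have NU0: "0 \<le> NU" and NV0: "0 \<le> NV" by (simp_all add: NU_def NV_def)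
  have NUb: "NU \<le> real (m div (r+1)) - real Kw"
  proof -
    have "real (m div (r+1)) \<ge> real m / real (r+1) - 1" by (rule real_div_ge) simp
    moreover have "NU \<ge> 3 + real Kw"
      using mt big1' unfolding NU_def by (smt (verit) divide_right_mono of_nat_0_le_iff)
    ultimately show ?thesis unfolding NU_def by (simp add: field_simps)
  qed
  have NVb: "NV \<le> real (n div r) - real Kw - 2"
  proof -
    have "real (n div r) \<ge> real n / real r - 1" by (rule real_div_ge) (use r in simp)
    moreover have "real n \<ge> t^4" using mt m by linarith
    hence "real n / (2 * real r) \<ge> t^4 / (2 * real (r+1))"
      using r t1 by (intro frac_le) auto
    hence "NV \<ge> 3 + real Kw" using big1' unfolding NV_def by linarith
    ultimately show ?thesis unfolding NV_def using r by (simp add: field_simps)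
  qed
  have mpC: "real m * p \<ge> C1 * t^4"
  proof -
    have "real m * p = C1 * (P1 * real m)" by (simp add: p_def algebra_simps)
    also have "\<dots> \<ge> C1 * t^4" using mp1 C1 by (intro mult_left_mono) auto
    finally show ?thesis .
  qed
  have aU: "NU * p / 4 = real m * p / (8 * real (r+1))" by (simp add: NU_def field_simps)
  have aV: "NV * p / 4 = real n * p / (8 * real r)" by (simp add: NV_def field_simps)
  have aUV: "real m * p / (8 * real (r+1)) \<le> real n * p / (8 * real r)"
  proof -
    have "real m * p \<le> real n * p" using m p0 by (intro mult_right_mono) auto
    thus ?thesis using r p0 by (intro frac_le) auto
  qed
  have aUge: "NU * p / 4 \<ge> C1 * t^4 / (8 * real (r+1))"
    unfolding aU using mpC by (intro divide_right_mono) auto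
  have t4: "t^4 \<ge> 12 * real (r+1)"
  proof -
    have "2 * real (r+1) * (3 + real d * C1 * t) \<ge> 2 * real (r+1) * 6" using dct by (intro mult_left_mono) auto
    thus ?thesis using big1 by linarith
  qed
  have C1t: "C1 * t^4 \<ge> t^4" using C1 t1 by simp
  have aU1: "NU * p / 4 \<ge> 1"
  proof -
    have "C1 * t^4 / (8 * real (r+1)) \<ge> 12 * real (r+1) / (8 * real (r+1))"
      using t4 C1t by (intro divide_right_mono) auto
    moreover have "12 * real (r+1) / (8 * real (r+1)) = 3/2" by (simp add: field_simps)
    ultimately show ?thesis using aUge by linarith
  qed
  have aV1: "NV * p / 4 \<ge> 1" using aU1 aUV aU aV by linarith
  have Phi0: "0 \<le> \<Phi>" by (simp add: \<Phi>_def)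
  have c32: "(32 * real (r+1)) ^ d \<ge> 32 * real (r+1)"
  proof -
    have "(32 * real (r+1)) ^ 1 \<le> (32 * real (r+1)) ^ d" by (intro power_increasing) (auto simp: d_def)
    thus ?thesis by simp
  qed
  have Phi1: "\<Phi> \<le> min (NU * p / 4) (NV * p / 4) / 4"
  proof -
    have "\<Phi> \<le> t^4 / (32 * real (r+1))" unfolding \<Phi>_def using c32 by (intro divide_left_mono) auto
    also have "\<dots> \<le> C1 * t^4 / (32 * real (r+1))" using C1t by (intro divide_right_mono) auto
    also have "\<dots> = (C1 * t^4 / (8 * real (r+1))) / 4" by simp
    also have "\<dots> \<le> (NU * p / 4) / 4" using aUge by (intro divide_right_mono) auto
    finally have "\<Phi> \<le> (NU * p / 4) / 4" .
    moreover have "NU * p / 4 \<le> NV * p / 4" using aUV aU aV by linarith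
    hence "min (NU * p / 4) (NV * p / 4) = NU * p / 4" by (rule min.absorb1)
    ultimately show ?thesis by simp
  qed
  have Phi2: "\<Phi> \<le> p * (NU * p / 4) ^ (r+1) * (NV * p / 4) ^ r"
  proof -
    define c where "c = 8 * real (r+1)"
    have c0: "c > 0" by (simp add: c_def)
    have A: "NU * p / 4 \<ge> real m * p / c" using aU unfolding c_def by linarith
    have B: "NV * p / 4 \<ge> real n * p / c"
    proof -
      have "real n * p / c \<le> real n * p / (8 * real r)"
        using r p0 by (intro divide_left_mono) (auto simp: c_def)
      thus ?thesis using aV by linarith
    qed
    have X: "(real m * p / c) ^ (r+1) \<le> (NU * p / 4) ^ (r+1)"
      by (rule power_mono[OF A]) (use p0 c0 in simp)
    have Y: "(real n * p / c) ^ r \<le> (NV * p / 4) ^ r"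
      by (rule power_mono[OF B]) (use p0 c0 in simp)
    have "(real m * p / c) ^ (r+1) * (real n * p / c) ^ r \<le> (NU * p / 4) ^ (r+1) * (NV * p / 4) ^ r"
      by (rule mult_mono[OF X Y]) (use p0 c0 NU0 in simp_all)
    hence "p * ((real m * p / c) ^ (r+1) * (real n * p / c) ^ r) \<le> p * ((NU * p / 4) ^ (r+1) * (NV * p / 4) ^ r)"
      using p0 by (intro mult_left_mono)
    hence "p * (real m * p / c) ^ (r+1) * (real n * p / c) ^ r \<le> p * (NU * p / 4) ^ (r+1) * (NV * p / 4) ^ r"
      by (simp only: mult.assoc)
    moreover have "p * (real m * p / c) ^ (r+1) * (real n * p / c) ^ r
        = C1 ^ (d+1) * (P1 * real m) * (P1 ^ d * (real m * real n) ^ r) / c ^ d"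
      by (simp add: p_def d_def power_mult_distrib power_divide power_add field_simps power_mult power2_eq_square)
    moreover have "C1 ^ (d+1) * (P1 * real m) * (P1 ^ d * (real m * real n) ^ r) / c ^ d \<ge> t^4 / c ^ d"
    proof -
      have L: "log 2 (real m * real n) \<ge> t"
        using m n unfolding t_def by (intro log_mono) auto
      have "C1 ^ (d+1) \<ge> 1" using C1 by (rule one_le_power)
      moreover have "P1 * real m \<ge> t^4" by (rule mp1)
      moreover have "P1 ^ d * (real m * real n) ^ r \<ge> 1" using ident L t1 by simp
      ultimately have "C1 ^ (d+1) * (P1 * real m) * (P1 ^ d * (real m * real n) ^ r) \<ge> 1 * t^4 * 1"
        using t1 P1(1) C1 by (intro mult_mono) auto
      thus ?thesis using c0 by (intro divide_right_mono) auto
    qed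
    moreover have "t^4 / c ^ d \<ge> \<Phi>"
      unfolding \<Phi>_def using c0 by (intro divide_left_mono power_mono) (auto simp: c_def)
    ultimately show ?thesis by linarith
  qed
  have sumB: "(\<Sum>j<2*r+2. dlt NU NV r p j) \<le> real (2*r+2) * exp (- \<Phi>)"
    by (rule dlt_sum[OF p0 P1(2) NU0 NV0 aU1 aV1 Phi0 Phi1 Phi2])
  have "measure_pmf.prob (random_bip m n p)
     {G. \<not> (\<forall>x<n. \<forall>y<n. x \<noteq> y \<longrightarrow> many_disjoint_paths m n G (2*r+2) k (Inr x) (Inr y))}
     \<le> real n * real n * (real (m + n) + 1) ^ Kw * (\<Sum>j<2*r+2. dlt NU NV r p j)"
    unfolding Kw_def N_def by (rule all_bound[OF r p0 P1(2) NU0 _ NV0]) (use NUb NVb in \<open>simp_all add: Kw_def N_def\<close>)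
  also have "\<dots> \<le> real n * real n * (real (m + n) + 1) ^ Kw * (real (2*r+2) * exp (- \<Phi>))"
    using sumB by (intro mult_left_mono) auto
  also have "\<dots> \<le> 1 / real n"
  proof -
    have n1: "n \<ge> 1" using n by simp
    have mn: "m \<le> n" using m(2) by simp
    have KwB': "real Kw \<le> real (2*r+1) * C1 * t" using KwB by (simp add: d_def)
    have big2': "(5 + 3 * real (2*r+1) * C1 + 2 * real r) * t^2 \<le> \<Phi>" using big2 by (simp add: d_def \<Phi>_def)
    show ?thesis by (rule final_bound_arith[OF n1 mn t1 lnt KwB' C1 big2'])
  qed
  finally show ?thesis by (simp add: k_def)
qed


lemma log2_seq: "filterlim (\<lambda>n::nat. log 2 (real n)) at_top sequentially"
proof (rule filterlim_at_top_mono)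
  show "filterlim (\<lambda>n::nat. ln (real n)) at_top sequentially"
    by (rule filterlim_compose[OF ln_at_top filterlim_real_sequentially])
  have "eventually (\<lambda>n::nat. n \<ge> 1) sequentially" by (rule eventually_ge_at_top)
  thus "eventually (\<lambda>n::nat. ln (real n) \<le> log 2 (real n)) sequentially"
  proof (rule eventually_mono)
    fix n :: nat assume n: "n \<ge> 1"
    have l0: "ln (real n) \<ge> 0" using n by simp
    have "ln (real n) / 1 \<le> ln (real n) / ln 2"
      using l0 ln_2_less_1 by (intro divide_left_mono) auto
    thus "ln (real n) \<le> log 2 (real n)" by (simp add: log_def)
  qed
qed

lemma ev_poly1:
  assumes "A \<ge> 0" "B \<ge> 0"
  shows "eventually (\<lambda>t::real. A + B * t \<le> t^4) at_top"
proof -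
  have "eventually (\<lambda>t::real. t \<ge> max 1 (A + B)) at_top" by (rule eventually_ge_at_top)
  thus ?thesis
  proof (rule eventually_mono)
    fix t :: real assume t: "t \<ge> max 1 (A + B)"
    hence t1: "t \<ge> 1" and tAB: "t \<ge> A + B" by auto
    have t2: "t^2 \<ge> 1" using t1 by (simp add: one_le_power)
    have "t * 1 \<le> t * t^2" using t1 t2 by (intro mult_left_mono) auto
    moreover have "t * t^2 = t^3" by (simp add: power3_eq_cube power2_eq_square)
    ultimately have "t^3 \<ge> t" by simp
    hence "t^3 \<ge> A + B" using tAB by linarith
    hence "t^3 * t \<ge> (A + B) * t" using t1 by (intro mult_right_mono) auto
    moreover have "(A + B) * t \<ge> A + B * t"
    proof -
      have "A * 1 \<le> A * t" using assms t1 by (intro mult_left_mono) auto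
      thus ?thesis by (simp add: algebra_simps)
    qed
    moreover have "t^3 * t = t^4" by (simp add: power3_eq_cube power4_eq_xxxx)
    ultimately show "A + B * t \<le> t^4" by linarith
  qed
qed

lemma ev_poly2:
  assumes "c > 0"
  shows "eventually (\<lambda>t::real. K * t^2 \<le> t^4 / c) at_top"
proof -
  have "eventually (\<lambda>t::real. t \<ge> max 1 (\<bar>K\<bar> * c)) at_top" by (rule eventually_ge_at_top)
  thus ?thesis
  proof (rule eventually_mono)
    fix t :: real assume t: "t \<ge> max 1 (\<bar>K\<bar> * c)"
    hence t1: "t \<ge> 1" and tK: "t \<ge> \<bar>K\<bar> * c" by auto
    have "t^2 \<ge> t" using t1 by (simp add: power2_eq_square)
    hence "t^2 \<ge> \<bar>K\<bar> * c" using tK by linarith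
    hence "t^2 * t^2 \<ge> (\<bar>K\<bar> * c) * t^2" by (intro mult_right_mono) auto
    moreover have "t^2 * t^2 = t^4" by simp
    moreover have "K * t^2 \<le> \<bar>K\<bar> * t^2" by (intro mult_right_mono) auto
    moreover have "K * t^2 * c \<le> \<bar>K\<bar> * t^2 * c"
      using assms \<open>K * t^2 \<le> \<bar>K\<bar> * t^2\<close> by (intro mult_right_mono) auto
    ultimately have "K * t^2 * c \<le> t^4" by (simp add: algebra_simps)
    thus "K * t^2 \<le> t^4 / c" using assms by (simp add: pos_le_divide_eq)
  qed
qed

lemma ev_comp:
  assumes "filterlim f at_top F" "eventually P at_top"
  shows "eventually (\<lambda>x. P (f x)) F"
  using assms by (simp add: filterlim_iff)

lemma ln2_ge_half: "ln (2::real) \<ge> 1/2"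
proof -
  have "ln (1/2::real) \<le> 1/2 - 1" by (rule ln_le_minus_one) simp
  thus ?thesis by (simp add: ln_div)
qed

lemma log2_le_sqrt:
  assumes "z \<ge> (1::real)"
  shows "log 2 z \<le> 4 * sqrt z"
proof -
  have sz: "sqrt z > 0" using assms by simp
  have "ln (sqrt z) \<le> sqrt z - 1" by (rule ln_le_minus_one[OF sz])
  moreover have "ln (sqrt z) = ln z / 2" using assms by (simp add: ln_sqrt)
  ultimately have lz: "ln z \<le> 2 * sqrt z" by linarith
  have "log 2 z = ln z / ln 2" by (simp add: log_def)
  also have "\<dots> \<le> (2 * sqrt z) / (1/2)"
    using lz ln2_ge_half assms by (intro frac_le) auto
  finally show ?thesis by simp
qed

lemma p1_ident:
  fixes M N :: real and r :: nat
  defines "d \<equiv> 2*r+1"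
  assumes M: "M > 0" and N: "N > 0" and X: "log 2 (M*N) > 0"
  shows "(log 2 (M*N) powr (1/real d) / (M powr ((real d - 1)/(2*real d)) * N powr ((real d - 1)/(2*real d)))) ^ d
           * (M*N)^r = log 2 (M*N)"
proof -
  define X where "X = log 2 (M*N)"
  have e: "(real d - 1)/(2*real d) = real r / real d" by (simp add: d_def field_simps)
  have d0: "real d > 0" by (simp add: d_def)
  have "(X powr (1/real d)) ^ d = X" using X d0 by (simp add: powr_power X_def)
  moreover have "(M powr (real r / real d)) ^ d = M ^ r" using M d0 by (simp add: powr_power powr_realpow)
  moreover have "(N powr (real r / real d)) ^ d = N ^ r" using N d0 by (simp add: powr_power powr_realpow)
  ultimately have "(X powr (1/real d) / (M powr (real r / real d) * N powr (real r / real d))) ^ d = X / (M^r * N^r)"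
    by (simp add: power_divide power_mult_distrib)
  moreover have "X / (M^r * N^r) * (M*N)^r = X" using M N by (simp add: power_mult_distrib)
  ultimately show ?thesis unfolding e X_def[symmetric] by simp
qed

lemma p_le1:
  fixes C1 P1 z :: real and r d :: nat
  assumes C1: "C1 \<ge> 1" and z: "z \<ge> 16 * C1 ^ (2*d)" and r: "r \<ge> 1" and d: "d \<ge> 1"
    and ident: "P1 ^ d * z ^ r = log 2 z" and P1: "P1 \<ge> 0"
  shows "C1 * P1 \<le> 1"
proof -
  have C1d: "C1 ^ d \<ge> 1" using C1 by (rule one_le_power)
  have z1: "z \<ge> 1"
  proof -
    have "C1 ^ (2*d) \<ge> 1" using C1 by (rule one_le_power)
    thus ?thesis using z by linarith
  qed
  have sq: "sqrt z \<ge> 4 * C1 ^ d"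
  proof -
    have "16 * C1 ^ (2*d) = (4 * C1 ^ d)^2"
      by (simp add: power_mult_distrib power_mult[symmetric] mult.commute)
    hence "sqrt (16 * C1 ^ (2*d)) = \<bar>4 * C1 ^ d\<bar>" by (simp only: real_sqrt_abs)
    hence "sqrt (16 * C1 ^ (2*d)) = 4 * C1 ^ d" using C1 by simp
    moreover have "sqrt (16 * C1 ^ (2*d)) \<le> sqrt z" using z by simp
    ultimately show ?thesis by simp
  qed
  have zr: "z ^ r \<ge> z" using z1 r by (metis power_increasing power_one_right)
  have sz: "sqrt z > 0" using z1 by simp
  have "(C1 * P1) ^ d = C1 ^ d * (log 2 z / z ^ r)"
  proof -
    have "z ^ r > 0" using z1 by simp
    hence "P1 ^ d = log 2 z / z ^ r" using ident z1 by (simp add: eq_divide_eq)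
    thus ?thesis by (simp add: power_mult_distrib)
  qed
  also have "\<dots> \<le> C1 ^ d * (4 * sqrt z / z)"
  proof -
    have lz: "log 2 z \<ge> 0" using z1 by simp
    have "log 2 z / z ^ r \<le> log 2 z / z" using lz zr z1 by (intro divide_left_mono) auto
    also have "\<dots> \<le> 4 * sqrt z / z" using log2_le_sqrt[OF z1] z1 by (intro divide_right_mono) auto
    finally show ?thesis using C1d by (intro mult_left_mono) auto
  qed
  also have "\<dots> = 4 * C1 ^ d / sqrt z"
  proof -
    have "z = sqrt z * sqrt z" using z1 by simp
    hence "4 * sqrt z / z = 4 / sqrt z" using sz by (metis divide_divide_eq_left nonzero_mult_div_cancel_left less_irrefl mult.commute)
    thus ?thesis by simp
  qed
  also have "\<dots> \<le> 1" using sq sz by (simp add: divide_le_eq)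
  finally have "(C1 * P1) ^ d \<le> 1" .
  thus ?thesis using C1 P1 d by (simp add: power_le_one_iff)
qed


theorem lemma8:
  fixes d :: nat and c0 :: real and m :: "nat \<Rightarrow> nat" and C1 :: real and p1 :: "nat \<Rightarrow> real"
  assumes "odd d" and "d \<ge> 2" and "c0 \<ge> 1"
  defines "C1 \<equiv> 2 ^ (10 * d) * c0"
  defines "p1 \<equiv> (\<lambda>n. (log 2 (real (m n) * real n)) powr (1 / real d) /
              ((real (m n)) powr ((real d - 1) / (2 * real d)) * (real n) powr ((real d - 1) / (2 * real d))))"
  assumes "eventually (\<lambda>n. p1 n * real n \<ge> p1 n * real (m n) \<and> p1 n * real (m n) \<ge> (log 2 (real n)) ^ 4) at_top"
  shows "\<exists>\<epsilon>>0. eventually (\<lambda>n.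
           measure_pmf.prob (random_bip (m n) n (C1 * p1 n))
             {G. \<forall>x<n. \<forall>y<n. x \<noteq> y \<longrightarrow>
                  many_disjoint_paths (m n) n G (d + 1) (2 ^ (10 * d) * c0 * log 2 (real n)) (Inr x) (Inr y)}
           \<ge> 1 - (real n) powr (- \<epsilon>)) at_top"
proof -
  obtain r where dr: "d = 2*r+1" using assms(1) oddE by blast
  have r: "r \<ge> 1" using assms(2) dr by simp
  have C1: "C1 \<ge> 1"
  proof -
    have "(1::real) \<le> 2 ^ (10 * d)" by simp
    hence "1 * 1 \<le> 2 ^ (10 * d) * c0" using assms(3) by (intro mult_mono) auto
    thus ?thesis by (simp add: C1_def)
  qed
  define A where "A = 6 * real (r+1)"
  define B where "B = 2 * real (r+1) * real d * C1"
  define K where "K = 5 + 3 * real d * C1 + 2 * real r"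
  define cc where "cc = (32 * real (r+1)) ^ d"
  have E3: "eventually (\<lambda>n::nat. A + B * log 2 (real n) \<le> (log 2 (real n))^4) at_top"
    by (rule ev_comp[OF log2_seq ev_poly1]) (use C1 in \<open>auto simp: A_def B_def\<close>)
  have E4: "eventually (\<lambda>n::nat. K * (log 2 (real n))^2 \<le> (log 2 (real n))^4 / cc) at_top"
    by (rule ev_comp[OF log2_seq ev_poly2]) (simp add: cc_def)
  have En: "eventually (\<lambda>n::nat. n \<ge> max 2 (nat \<lceil>16 * C1 ^ (2*d)\<rceil>)) at_top"
    by (rule eventually_ge_at_top)
  have "eventually (\<lambda>n.
           measure_pmf.prob (random_bip (m n) n (C1 * p1 n))
             {G. \<forall>x<n. \<forall>y<n. x \<noteq> y \<longrightarrow>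
                  many_disjoint_paths (m n) n G (d + 1) (2 ^ (10 * d) * c0 * log 2 (real n)) (Inr x) (Inr y)}
           \<ge> 1 - (real n) powr (- 1)) at_top"
    using eventually_conj[OF assms(6) eventually_conj[OF E3 eventually_conj[OF E4 En]]]
  proof (rule eventually_mono, goal_cases)
    case (1 n)
    note elim = conjunct1[OF 1] conjunct1[OF conjunct2[OF 1]] conjunct1[OF conjunct2[OF conjunct2[OF 1]]]
      conjunct2[OF conjunct2[OF conjunct2[OF 1]]]
    define t where "t = log 2 (real n)"
    define P1 where "P1 = p1 n"
    define mm where "mm = m n"
    have n2: "n \<ge> 2" using elim(4) by simp
    have nC: "real n \<ge> 16 * C1 ^ (2*d)"
    proof -
      have "real (nat \<lceil>16 * C1 ^ (2*d)\<rceil>) \<ge> 16 * C1 ^ (2*d)" by (rule real_nat_ceiling_ge)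
      moreover have "nat \<lceil>16 * C1 ^ (2*d)\<rceil> \<le> n" using elim(4) by simp
      ultimately show ?thesis by linarith
    qed
    have t1: "t \<ge> 1" using n2 by (simp add: t_def)
    have H1: "P1 * real n \<ge> P1 * real mm" and H2: "P1 * real mm \<ge> t^4"
      using elim(1) by (simp_all add: P1_def mm_def t_def)
    have P1nn: "P1 \<ge> 0" by (simp add: P1_def p1_def)
    have t4: "t^4 \<ge> 1" using t1 by (simp add: one_le_power)
    have P1pos: "P1 > 0" and mpos: "mm \<ge> 1"
    proof -
      have "P1 * real mm > 0" using H2 t4 by linarith
      thus "P1 > 0" "mm \<ge> 1" using P1nn by (auto simp: zero_less_mult_iff)
    qed
    have mn: "real mm \<le> real n" using H1 P1pos by simp
    have mn1: "real mm * real n \<ge> real n"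
    proof -
      have "1 * real n \<le> real mm * real n" using mpos by (intro mult_right_mono) auto
      thus ?thesis by simp
    qed
    have Xpos: "log 2 (real mm * real n) > 0"
    proof -
      have "real mm * real n > 1" using mn1 n2 by linarith
      thus ?thesis by simp
    qed
    have ident0: "P1 ^ d * (real mm * real n) ^ r = log 2 (real mm * real n)"
    proof -
      have "(log 2 (real mm * real n) powr (1/real (2*r+1)) /
            (real mm powr ((real (2*r+1) - 1)/(2*real (2*r+1))) * real n powr ((real (2*r+1) - 1)/(2*real (2*r+1))))) ^ (2*r+1)
           * (real mm * real n)^r = log 2 (real mm * real n)"
        by (rule p1_ident) (use mpos n2 Xpos in auto)
      thus ?thesis by (simp add: P1_def p1_def mm_def dr)
    qed
    have p1le: "C1 * P1 \<le> 1"
      by (rule p_le1[OF C1 _ r _ ident0 P1nn]) (use nC mn1 dr in auto)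
    have big1: "t^4 \<ge> 2 * real (r+1) * (3 + real d * C1 * t)"
      using elim(2) by (simp add: A_def B_def t_def algebra_simps)
    have big2: "(5 + 3 * real d * C1 + 2 * real r) * t^2 \<le> t^4 / (32 * real (r+1)) ^ d"
      using elim(3) by (simp add: K_def cc_def t_def)
    have fin: "measure_pmf.prob (random_bip mm n (C1 * P1))
       {G. \<not> (\<forall>x<n. \<forall>y<n. x \<noteq> y \<longrightarrow> many_disjoint_paths mm n G (2*r+2) (C1 * t) (Inr x) (Inr y))}
       \<le> 1 / real n"
      unfolding t_def
      by (rule final_n[OF r C1 n2 mpos mn P1pos p1le]) (use H2 ident0 big1 big2 in \<open>simp_all add: t_def dr\<close>)
    let ?E = "{G. \<forall>x<n. \<forall>y<n. x \<noteq> y \<longrightarrow> many_disjoint_paths mm n G (2*r+2) (C1 * t) (Inr x) (Inr y)}"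
    have "measure_pmf.prob (random_bip mm n (C1 * P1)) ?E =
          1 - measure_pmf.prob (random_bip mm n (C1 * P1)) (UNIV - ?E)"
      using measure_pmf.prob_compl[of "UNIV - ?E" "random_bip mm n (C1 * P1)"] by (simp add: Diff_Diff_Int)
    also have "UNIV - ?E = {G. \<not> (\<forall>x<n. \<forall>y<n. x \<noteq> y \<longrightarrow> many_disjoint_paths mm n G (2*r+2) (C1 * t) (Inr x) (Inr y))}"
      by blast
    finally have "measure_pmf.prob (random_bip mm n (C1 * P1)) ?E \<ge> 1 - 1 / real n" using fin by linarith
    moreover have "real n powr (- 1) = 1 / real n" using n2 by (simp add: powr_minus divide_inverse)
    moreover have "2 ^ (10 * d) * c0 * log 2 (real n) = C1 * t" by (simp add: C1_def t_def)
    moreover have "d + 1 = 2*r+2" using dr by simp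
    ultimately show ?case by (simp add: mm_def P1_def)
  qed
  thus ?thesis by (intro exI[of _ 1]) simp
qed


end
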